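(* Let $1\le n<L$ and all rates $p_k,q_k>0$. For $1\le i\le n$, the total horizontal stationary current of the $\bullet$ in row $i$ is $$J_\bullet(i)=(p_1\cdots p_n-q_1\cdots q_n)\,\frac{Z_{L-1,n}}{Z_{L,n}}.$$
   Context: Particle labels/rows are taken modulo $n$, positions/columns modulo $L$. $\Omega_{L,n}$ is the set of words $w_1\cdots w_L$ on the ring $\mathbb{Z}/L\mathbb{Z}$ over the alphabet $\{\bullet_1,\dots,\bullet_n,\Box_1,\dots,\Box_n\}$ in which each $\bullet_k$ occurs exactly once, the $\bullet_1,\dots,\bullet_n$ appear in this cyclic order, and the remaining $L-n$ letters are arbitrary $\Box_i$'s. Transitions (displayed segments are consecutive positions, rest unchanged, $C$ a possibly empty word in the $\Box$-letters): (T1) $\bullet_k\Box_i \to \Box_i\bullet_k$ at rate $p_k$, if $i\neq k$; (T2) $\bullet_{k-1}\,C\,\bullet_k\Box_k \to \bullet_{k-1}\Box_{k-1}\,C\,\bullet_k$ at rate $p_k$; (T3) $\Box_i\bullet_k \to \bullet_k\Box_i$ at rate $q_k$, if $i\neq k$; (T4) $\Box_k\bullet_k\,C\,\bullet_{k+1} \to \bullet_k\,C\,\Box_{k+1}\bullet_{k+1}$ at rate $q_k$. $\mathcal{A}_{L,n}$ is the set of arrays with $n$ rows and $L$ columns, entries in $\{\cdot,\bullet,\Box\}$, identified with $\Omega_{L,n}$ via: column $j$ has a $\bullet$ (resp. $\Box$) in row $k$ and $\cdot$ elsewhere iff $w_j=\bullet_k$ (resp. $\Box_k$); it carries the transported dynamics.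 $\tau_{i,j}$ (resp. $\eta_{i,j}$) is the indicator that site (row $i$, column $j$) holds a $\bullet$ (resp. $\Box$); $\langle\cdot\rangle$ is expectation under the unique stationary distribution. Define $J_\bullet(i,j)=p_i\langle\tau_{i,j}\sum_{k=1}^n\eta_{k,j+1}\rangle-q_i\langle\tau_{i,j+1}\sum_{k=1}^n\eta_{k,j}\rangle$ and $J_\bullet(i)=\sum_{j=1}^L J_\bullet(i,j)$. Weights: for $i,k\in\{1,\dots,n\}$, $w_\Box(i,k)=p_1\cdots p_{i-1}q_{i+1}\cdots q_kp_{k+1}\cdots p_n$ if $i\le k$ and $w_\Box(i,k)=q_1\cdots q_kp_{k+1}\cdots p_{i-1}q_{i+1}\cdots q_n$ if $k<i$ (empty products are $1$). For a word let $b_k$ be the position of $\bullet_k$ and $C_k$ the positions strictly between $b_k$ and $b_{k+1}$ cyclically forward ($b_{n+1}=b_1$); $\mathrm{wt}(w)=\prod_k\prod_{j\in C_k}w_\Box(i_j,k)$ with $w_j=\Box_{i_j}$. For $L'\ge n$, $Z_{L',n}=\sum\mathrm{wt}(w)$ over $w\in\Omega_{L',n}$ with $w_1=\bullet_1$. *)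

theory Defs
  imports Complex_Main
begin

text \<open>Letters: Ball k is the particle of species k, Box i is a hole of type i
  (labels in 1..n). A word of length L is a list; position j (0-based) is column j+1
  of the paper; positions are read modulo L.\<close>

datatype letter = Ball nat | Box nat

definition nxt :: "nat \<Rightarrow> nat \<Rightarrow> nat" where
  "nxt n k = (if k = n then 1 else k + 1)"

definition prv :: "nat \<Rightarrow> nat \<Rightarrow> nat" where
  "prv n k = (if k = 1 then n else k - 1)"

text \<open>Cyclic forward distance from a to b on Z/LZ, with values in 1..L
  (distance L when a = b).\<close>
definition fwd :: "nat \<Rightarrow> nat \<Rightarrow> nat \<Rightarrow> nat" where
  "fwd L a b = ((b + L - a - 1) mod L) + 1"

definition bpos :: "letter list \<Rightarrow> nat \<Rightarrow> nat" where
  "bpos w k = (THE j. j < length w \<and> w ! j = Ball k)"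

definition is_ball :: "letter \<Rightarrow> bool" where
  "is_ball x = (\<exists>k. x = Ball k)"

definition gapC :: "nat \<Rightarrow> letter list \<Rightarrow> nat \<Rightarrow> nat set" where
  "gapC n w k = {j. j < length w \<and>
      fwd (length w) (bpos w k) j < fwd (length w) (bpos w k) (bpos w (nxt n k))}"

definition Omega :: "nat \<Rightarrow> nat \<Rightarrow> letter list set" where
  "Omega L n = {w. length w = L
     \<and> (\<forall>j<L. (\<exists>k\<in>{1..n}. w ! j = Ball k) \<or> (\<exists>i\<in>{1..n}. w ! j = Box i))
     \<and> (\<forall>k\<in>{1..n}. \<exists>!j. j < L \<and> w ! j = Ball k)
     \<and> (\<forall>k\<in>{1..n}. \<forall>j\<in>gapC n w k. \<not> is_ball (w ! j))}"

definition swap_pos :: "letter list \<Rightarrow> nat \<Rightarrow> nat \<Rightarrow> letter list" where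
  "swap_pos w a c = w[a := w ! c, c := w ! a]"

text \<open>(T2): bullet_{k-1} C bullet_k Box_k  ->  bullet_{k-1} Box_{k-1} C bullet_k\<close>
definition t2 :: "nat \<Rightarrow> letter list \<Rightarrow> nat \<Rightarrow> letter list" where
  "t2 n w k = (let L = length w; bk = bpos w k; bp = bpos w (prv n k); g = fwd L bp bk in
     map (\<lambda>j. if j = (bk + 1) mod L then Ball k
              else if j = (bp + 1) mod L then Box (prv n k)
              else if 2 \<le> fwd L bp j \<and> fwd L bp j \<le> g then w ! ((j + L - 1) mod L)
              else w ! j) [0..<L])"

text \<open>(T4): Box_k bullet_k C bullet_{k+1}  ->  bullet_k C Box_{k+1} bullet_{k+1}\<close>
definition t4 :: "nat \<Rightarrow> letter list \<Rightarrow> nat \<Rightarrow> letter list" where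
  "t4 n w k = (let L = length w; bk = bpos w k; bn = bpos w (nxt n k); g = fwd L bk bn in
     map (\<lambda>j. if j = (bk + L - 1) mod L then Ball k
              else if j = (bn + L - 1) mod L then Box (nxt n k)
              else if j = bk \<or> fwd L bk j + 2 \<le> g then w ! ((j + 1) mod L)
              else w ! j) [0..<L])"

text \<open>Moves of the ball k to the right ((T1)/(T2), rate p k) and to the left ((T3)/(T4), rate q k).\<close>
definition right_moves :: "nat \<Rightarrow> (nat \<Rightarrow> real) \<Rightarrow> letter list \<Rightarrow> nat \<Rightarrow> (real \<times> letter list) list" where
  "right_moves n p w k = (let L = length w; b = bpos w k; j = (b + 1) mod L in
     (case w ! j of Box i \<Rightarrow> (if i \<noteq> k then [(p k, swap_pos w b j)] else [(p k, t2 n w k)])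
                  | Ball _ \<Rightarrow> []))"

definition left_moves :: "nat \<Rightarrow> (nat \<Rightarrow> real) \<Rightarrow> letter list \<Rightarrow> nat \<Rightarrow> (real \<times> letter list) list" where
  "left_moves n q w k = (let L = length w; b = bpos w k; j = (b + L - 1) mod L in
     (case w ! j of Box i \<Rightarrow> (if i \<noteq> k then [(q k, swap_pos w b j)] else [(q k, t4 n w k)])
                  | Ball _ \<Rightarrow> []))"

definition moves :: "nat \<Rightarrow> (nat \<Rightarrow> real) \<Rightarrow> (nat \<Rightarrow> real) \<Rightarrow> letter list \<Rightarrow> (real \<times> letter list) list" where
  "moves n p q w = concat (map (\<lambda>k. right_moves n p w k @ left_moves n q w k) [1..<n+1])"

definition rate :: "nat \<Rightarrow> (nat \<Rightarrow> real) \<Rightarrow> (nat \<Rightarrow> real) \<Rightarrow> letter list \<Rightarrow> letter list \<Rightarrow> real" where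
  "rate n p q w w' = sum_list (map fst (filter (\<lambda>m. snd m = w') (moves n p q w)))"

definition out_rate :: "nat \<Rightarrow> (nat \<Rightarrow> real) \<Rightarrow> (nat \<Rightarrow> real) \<Rightarrow> letter list \<Rightarrow> real" where
  "out_rate n p q w = sum_list (map fst (moves n p q w))"

definition stationary :: "nat \<Rightarrow> nat \<Rightarrow> (nat \<Rightarrow> real) \<Rightarrow> (nat \<Rightarrow> real) \<Rightarrow> (letter list \<Rightarrow> real) \<Rightarrow> bool" where
  "stationary L n p q \<pi> =
     ((\<forall>w\<in>Omega L n. 0 \<le> \<pi> w) \<and> (\<Sum>w\<in>Omega L n. \<pi> w) = 1 \<and>
      (\<forall>w\<in>Omega L n. (\<Sum>w'\<in>Omega L n. \<pi> w' * rate n p q w' w) = \<pi> w * out_rate n p q w))"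

definition expect :: "nat \<Rightarrow> nat \<Rightarrow> (letter list \<Rightarrow> real) \<Rightarrow> (letter list \<Rightarrow> real) \<Rightarrow> real" where
  "expect L n \<pi> f = (\<Sum>w\<in>Omega L n. \<pi> w * f w)"

text \<open>tau i j: row i column j holds a bullet; sum over k of eta k j: column j holds a box.\<close>
definition tau :: "nat \<Rightarrow> nat \<Rightarrow> letter list \<Rightarrow> real" where
  "tau i j w = (if w ! j = Ball i then 1 else 0)"

definition eta :: "nat \<Rightarrow> nat \<Rightarrow> letter list \<Rightarrow> real" where
  "eta k j w = (if w ! j = Box k then 1 else 0)"

definition Jball_ij :: "nat \<Rightarrow> nat \<Rightarrow> (nat \<Rightarrow> real) \<Rightarrow> (nat \<Rightarrow> real) \<Rightarrow> (letter list \<Rightarrow> real) \<Rightarrow> nat \<Rightarrow> nat \<Rightarrow> real" where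
  "Jball_ij L n p q \<pi> i j =
     p i * expect L n \<pi> (\<lambda>w. tau i j w * (\<Sum>k=1..n. eta k ((j + 1) mod L) w))
   - q i * expect L n \<pi> (\<lambda>w. tau i ((j + 1) mod L) w * (\<Sum>k=1..n. eta k j w))"

definition Jball :: "nat \<Rightarrow> nat \<Rightarrow> (nat \<Rightarrow> real) \<Rightarrow> (nat \<Rightarrow> real) \<Rightarrow> (letter list \<Rightarrow> real) \<Rightarrow> nat \<Rightarrow> real" where
  "Jball L n p q \<pi> i = (\<Sum>j<L. Jball_ij L n p q \<pi> i j)"

definition wbox :: "nat \<Rightarrow> (nat \<Rightarrow> real) \<Rightarrow> (nat \<Rightarrow> real) \<Rightarrow> nat \<Rightarrow> nat \<Rightarrow> real" where
  "wbox n p q i k = (if i \<le> k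
     then (\<Prod>a\<in>{1..<i}. p a) * (\<Prod>a\<in>{i+1..k}. q a) * (\<Prod>a\<in>{k+1..n}. p a)
     else (\<Prod>a\<in>{1..k}. q a) * (\<Prod>a\<in>{k+1..<i}. p a) * (\<Prod>a\<in>{i+1..n}. q a))"

definition box_label :: "letter \<Rightarrow> nat" where
  "box_label x = (case x of Box i \<Rightarrow> i | Ball k \<Rightarrow> 0)"

definition wt :: "nat \<Rightarrow> (nat \<Rightarrow> real) \<Rightarrow> (nat \<Rightarrow> real) \<Rightarrow> letter list \<Rightarrow> real" where
  "wt n p q w = (\<Prod>k\<in>{1..n}. \<Prod>j\<in>gapC n w k. wbox n p q (box_label (w ! j)) k)"

definition Z :: "nat \<Rightarrow> nat \<Rightarrow> (nat \<Rightarrow> real) \<Rightarrow> (nat \<Rightarrow> real) \<Rightarrow> real" where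
  "Z L n p q = (\<Sum>w\<in>{w\<in>Omega L n. w ! 0 = Ball 1}. wt n p q w)"

end

theory Submission
  imports Defs "HOL-Library.FuncSet"
begin


definition valid :: "nat \<Rightarrow> letter \<Rightarrow> bool" where
  "valid n x = ((\<exists>k\<in>{1..n}. x = letter.Ball k) \<or> (\<exists>i\<in>{1..n}. x = Box i))"

definition good :: "nat \<Rightarrow> nat \<Rightarrow> (nat \<Rightarrow> nat) \<Rightarrow> bool" where
  "good L n c = ((\<forall>k\<in>{1..n}. c k < L) \<and> inj_on c {1..n} \<and>
     (\<forall>a\<in>{1..n}. \<forall>l\<in>{1..n}. fwd L (c a) (c (nxt n a)) \<le> fwd L (c a) (c l)))"

definition BC :: "nat \<Rightarrow> letter list \<Rightarrow> (nat \<Rightarrow> nat) \<Rightarrow> bool" where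
  "BC n w c = (\<forall>x<length w. \<forall>m. w!x = letter.Ball m \<longleftrightarrow> (m \<in> {1..n} \<and> x = c m))"

lemma fwd_eq: "a < L \<Longrightarrow> b < L \<Longrightarrow> fwd L a b = (if a < b then b - a else b + L - a)"
proof (cases "a < b")
  case True
  assume "a < L" "b < L"
  have e: "b + L - a - 1 = (b - a - 1) + L" using True by simp
  have "(b + L - a - 1) mod L = (b - a - 1) mod L" unfolding e by (rule mod_add_self2)
  also have "\<dots> = b - a - 1" using \<open>b < L\<close> by simp
  finally show ?thesis unfolding fwd_def using True by simp
next
  case False
  assume "a < L" "b < L"
  have "(b + L - a - 1) mod L = b + L - a - 1" using False \<open>a < L\<close> by simp
  then show ?thesis unfolding fwd_def using False \<open>a < L\<close> by simp
qed

lemma fwd_le: "a < L \<Longrightarrow> b < L \<Longrightarrow> fwd L a b \<le> L"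
  by (auto simp add: fwd_eq)

lemma fwd_pos: "a < L \<Longrightarrow> b < L \<Longrightarrow> 1 \<le> fwd L a b"
  by (auto simp add: fwd_eq)

lemma fwd_self: "a < L \<Longrightarrow> fwd L a a = L"
  by (simp add: fwd_eq)

lemma fwd_ltL: "a < L \<Longrightarrow> b < L \<Longrightarrow> fwd L a b < L \<longleftrightarrow> a \<noteq> b"
  by (auto simp add: fwd_eq)

lemma mod_suc: "(b::nat) < L \<Longrightarrow> (b + 1) mod L = (if b + 1 = L then 0 else b + 1)"
proof (cases "b + 1 = L")
  case True then show ?thesis by simp
next
  case False
  assume "b < L" then have "b + 1 < L" using False by simp
  then show ?thesis using False by simp
qed

lemma mod_pred: "(b::nat) < L \<Longrightarrow> (b + L - 1) mod L = (if b = 0 then L - 1 else b - 1)"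
proof -
  assume b: "b < L"
  show ?thesis
  proof (cases "b = 0")
    case True
    have "L - 1 < L" using b by simp
    then show ?thesis using True by simp
  next
    case False
    then have e: "b + L - 1 = (b - 1) + L" using b by simp
    have "(b + L - 1) mod L = (b - 1) mod L" unfolding e by (rule mod_add_self2)
    also have "\<dots> = b - 1" using b by simp
    finally show ?thesis using False by simp
  qed
qed

lemma nxt_in: "k \<in> {1..n} \<Longrightarrow> nxt n k \<in> {1..n}"
  by (auto simp: nxt_def)
lemma prv_in: "k \<in> {1..n} \<Longrightarrow> prv n k \<in> {1..n}"
  by (auto simp: prv_def)
lemma nxt_prv: "k \<in> {1..n} \<Longrightarrow> nxt n (prv n k) = k"
  by (auto simp: nxt_def prv_def)
lemma prv_nxt: "k \<in> {1..n} \<Longrightarrow> prv n (nxt n k) = k"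
  by (auto simp: nxt_def prv_def)

lemma Omega_D:
  assumes "w \<in> Omega L n"
  shows "length w = L" "\<forall>x<L. valid n (w!x)" "good L n (bpos w)" "BC n w (bpos w)"
proof -
  note O = assms[unfolded Omega_def mem_Collect_eq]
  show len: "length w = L" using O by (elim conjE)
  have O2: "\<forall>j<L. (\<exists>k\<in>{1..n}. w ! j = letter.Ball k) \<or> (\<exists>i\<in>{1..n}. w ! j = Box i)"
    and O3: "\<forall>k\<in>{1..n}. \<exists>!j. j < L \<and> w ! j = letter.Ball k"
    and O4: "\<forall>k\<in>{1..n}. \<forall>j\<in>gapC n w k. \<not> is_ball (w ! j)"
    using O by blast+
  show val: "\<forall>x<L. valid n (w!x)" using O2 unfolding valid_def by blast
  have bp: "bpos w k < L \<and> w ! bpos w k = letter.Ball k" if "k \<in> {1..n}" for k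
  proof -
    from O3 that have "\<exists>!j. j < L \<and> w ! j = letter.Ball k" by blast
    then show ?thesis unfolding bpos_def len by (rule theI')
  qed
  have uniq: "x = bpos w k" if "k \<in> {1..n}" "x < L" "w ! x = letter.Ball k" for k x
  proof -
    from O3 that have "\<exists>!j. j < L \<and> w ! j = letter.Ball k" by blast
    then show ?thesis using bp[OF that(1)] that by blast
  qed
  show bc: "BC n w (bpos w)"
    unfolding BC_def
  proof (intro allI impI iffI)
    fix x m assume x: "x < length w" and e: "w ! x = letter.Ball m"
    from val x len have "valid n (w!x)" by auto
    with e have m: "m \<in> {1..n}" unfolding valid_def by auto
    then show "m \<in> {1..n} \<and> x = bpos w m" using uniq[OF m] x e len by auto
  next
    fix x m assume "m \<in> {1..n} \<and> x = bpos w m"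
    then show "w ! x = letter.Ball m" using bp by auto
  qed
  show "good L n (bpos w)"
    unfolding good_def
  proof (intro conjI ballI)
    fix k assume "k \<in> {1..n}" then show "bpos w k < L" using bp by auto
  next
    show "inj_on (bpos w) {1..n}"
    proof (rule inj_onI)
      fix x y assume x: "x \<in> {1..n}" and y: "y \<in> {1..n}" and e: "bpos w x = bpos w y"
      have "letter.Ball x = w ! bpos w x" using bp[OF x] by simp
      also have "\<dots> = w ! bpos w y" using e by simp
      also have "\<dots> = letter.Ball y" using bp[OF y] by simp
      finally show "x = y" by simp
    qed
  next
    fix a l assume a: "a \<in> {1..n}" and l: "l \<in> {1..n}"
    show "fwd L (bpos w a) (bpos w (nxt n a)) \<le> fwd L (bpos w a) (bpos w l)"
    proof (rule ccontr)
      assume "\<not> ?thesis"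
      then have "bpos w l \<in> gapC n w a" unfolding gapC_def using bp[OF l] len by simp
      then have "\<not> is_ball (w ! bpos w l)" using O4 a by blast
      then show False using bp[OF l] unfolding is_ball_def by auto
    qed
  qed
qed

lemma bpos_eq:
  assumes "BC n w c" "good (length w) n c" "k \<in> {1..n}"
  shows "bpos w k = c k"
proof -
  have "c k < length w" using assms(2,3) unfolding good_def by auto
  moreover have "w ! c k = letter.Ball k" using assms(1,3) calculation unfolding BC_def by auto
  moreover have "\<And>j. j < length w \<and> w ! j = letter.Ball k \<Longrightarrow> j = c k"
    using assms(1) unfolding BC_def by auto
  ultimately show ?thesis unfolding bpos_def by (intro the_equality) blast+
qed

lemma Omega_I:
  assumes "length w = L" "\<forall>x<L. valid n (w!x)" "good L n c" "BC n w c"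
  shows "w \<in> Omega L n"
proof -
  have bp: "bpos w k = c k" if "k \<in> {1..n}" for k
    using bpos_eq assms that by auto
  have cl: "c k < L" if "k \<in> {1..n}" for k using assms(3) that unfolding good_def by auto
  have A: "\<exists>!j. j < L \<and> w ! j = letter.Ball k" if "k \<in> {1..n}" for k
    using assms(1,4) that cl unfolding BC_def by auto
  have B: "\<not> is_ball (w ! j)" if k: "k \<in> {1..n}" and j: "j \<in> gapC n w k" for k j
  proof
    assume "is_ball (w ! j)"
    then obtain m where m: "w ! j = letter.Ball m" unfolding is_ball_def by auto
    have jl: "j < L" using j assms(1) unfolding gapC_def by auto
    then have mj: "m \<in> {1..n}" "j = c m" using m assms(1,4) unfolding BC_def by auto
    have "fwd L (c k) (c m) < fwd L (c k) (c (nxt n k))"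
      using j assms(1) unfolding gapC_def bp[OF k] bp[OF nxt_in[OF k]] mj(2) by auto
    moreover have "fwd L (c k) (c (nxt n k)) \<le> fwd L (c k) (c m)"
      using assms(3) k mj(1) unfolding good_def by auto
    ultimately show False by simp
  qed
  show ?thesis unfolding Omega_def
    using assms(1,2) A B unfolding valid_def by auto
qed


lemma fwd_succ:
  assumes "a < L" "x < L" "x \<noteq> a" "(x + 1) mod L \<noteq> a"
  shows "fwd L a ((x + 1) mod L) = fwd L a x + 1"
proof (cases "x + 1 = L")
  case True
  then have "(x + 1) mod L = 0" by simp
  then show ?thesis using assms True by (auto simp: fwd_eq)
next
  case False
  then have "(x + 1) mod L = x + 1" using assms by simp
  then show ?thesis using assms False by (auto simp: fwd_eq)
qed

lemma fwd_from_succ: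
  assumes "b < L" "x < L" "x \<noteq> b" "x \<noteq> (b + 1) mod L"
  shows "fwd L ((b + 1) mod L) x = fwd L b x - 1"
proof (cases "b + 1 = L")
  case True
  then have "(b + 1) mod L = 0" by simp
  then show ?thesis using assms True by (auto simp: fwd_eq)
next
  case False
  then have "(b + 1) mod L = b + 1" using assms by simp
  then show ?thesis using assms False by (auto simp: fwd_eq)
qed

lemma fwd_inj:
  assumes "a < L" "x < L" "y < L" "fwd L a x = fwd L a y"
  shows "x = y"
  using assms by (auto simp: fwd_eq split: if_splits)

lemma fwd_pred:
  assumes "a < L" "x < L" "x \<noteq> a" "(x + L - 1) mod L \<noteq> a"
  shows "fwd L a ((x + L - 1) mod L) = fwd L a x - 1"
proof (cases "x = 0")
  case True
  then have "(x + L - 1) mod L = L - 1" using assms mod_pred[of x L] by simp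
  then show ?thesis using assms True by (auto simp: fwd_eq)
next
  case False
  then have "(x + L - 1) mod L = x - 1" using assms mod_pred[of x L] by simp
  then show ?thesis using assms False by (auto simp: fwd_eq)
qed

lemma fwd_from_pred:
  assumes "b < L" "y < L" "y \<noteq> b" "y \<noteq> (b + L - 1) mod L"
  shows "fwd L ((b + L - 1) mod L) y = fwd L b y + 1"
proof (cases "b = 0")
  case True
  then have "(b + L - 1) mod L = L - 1" using assms mod_pred[of b L] by simp
  then show ?thesis using assms True by (auto simp: fwd_eq)
next
  case False
  then have "(b + L - 1) mod L = b - 1" using assms mod_pred[of b L] by simp
  then show ?thesis using assms False by (auto simp: fwd_eq)
qed

lemma succ_lt: "(b::nat) < L \<Longrightarrow> (b + 1) mod L < L" by simp
lemma pred_lt: "(b::nat) < L \<Longrightarrow> (b + L - 1) mod L < L" by simp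

lemma fwd_to_succ: assumes "b < L" "2 \<le> L" shows "fwd L b ((b + 1) mod L) = 1"
proof (cases "b + 1 = L")
  case True
  then have "(b + 1) mod L = 0" by simp
  then show ?thesis using assms True by (auto simp: fwd_eq)
next
  case False
  then have "(b + 1) mod L = b + 1" using assms by simp
  then show ?thesis using assms False by (auto simp: fwd_eq)
qed

lemma fwd_to_pred: assumes "b < L" "2 \<le> L" shows "fwd L ((b + L - 1) mod L) b = 1"
proof (cases "b = 0")
  case True
  then have "(b + L - 1) mod L = L - 1" using assms mod_pred[of b L] by simp
  then show ?thesis using assms True by (auto simp: fwd_eq)
next
  case False
  then have "(b + L - 1) mod L = b - 1" using assms mod_pred[of b L] by simp
  then show ?thesis using assms False by (auto simp: fwd_eq)
qed

lemma nxt_eq_self: "k \<in> {1..n} \<Longrightarrow> nxt n k = k \<longleftrightarrow> n = 1"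
  by (auto simp: nxt_def)
lemma prv_eq_self: "k \<in> {1..n} \<Longrightarrow> prv n k = k \<longleftrightarrow> n = 1"
  by (auto simp: prv_def)
lemma nxt_eq_iff: "a \<in> {1..n} \<Longrightarrow> k \<in> {1..n} \<Longrightarrow> nxt n a = k \<longleftrightarrow> a = prv n k"
  by (auto simp: nxt_def prv_def)

lemma good_lt: "good L n c \<Longrightarrow> k \<in> {1..n} \<Longrightarrow> c k < L"
  unfolding good_def by auto
lemma good_inj: "good L n c \<Longrightarrow> k \<in> {1..n} \<Longrightarrow> l \<in> {1..n} \<Longrightarrow> c k = c l \<longleftrightarrow> k = l"
  unfolding good_def inj_on_def by blast
lemma good_CO: "good L n c \<Longrightarrow> a \<in> {1..n} \<Longrightarrow> l \<in> {1..n} \<Longrightarrow>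
    fwd L (c a) (c (nxt n a)) \<le> fwd L (c a) (c l)"
  unfolding good_def by blast

lemma posR:
  assumes g: "good L n c" and k: "k \<in> {1..n}" and d: "2 \<le> fwd L (c k) (c (nxt n k))"
  defines "c' \<equiv> c(k := (c k + 1) mod L)"
  shows "good L n c'"
    and "\<And>a. a \<in> {1..n} \<Longrightarrow> fwd L (c' a) (c' (nxt n a)) =
       (if a = k \<and> a = prv n k then fwd L (c a) (c (nxt n a))
        else if a = k then fwd L (c a) (c (nxt n a)) - 1
        else if a = prv n k then fwd L (c a) (c (nxt n a)) + 1
        else fwd L (c a) (c (nxt n a)))"
proof -
  define b where "b = c k"
  define s where "s = (b + 1) mod L"
  have nk: "nxt n k \<in> {1..n}" using nxt_in[OF k] .
  have bL: "b < L" using good_lt[OF g k] b_def by simp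
  have L2: "2 \<le> L" using d fwd_le[OF bL good_lt[OF g nk]] b_def by simp
  have sL: "s < L" using bL s_def by simp
  have fbs: "fwd L b s = 1" using fwd_to_succ[OF bL L2] s_def by simp
  have cs: "c l \<noteq> s" if l: "l \<in> {1..n}" for l
  proof
    assume "c l = s"
    then have "fwd L b (c l) = 1" using fbs by simp
    then show False using good_CO[OF g k l] d b_def by simp
  qed
  have sb: "s \<noteq> b" using fbs fwd_self[OF bL] L2 by auto
  have c'a: "c' a = (if a = k then s else c a)" for a unfolding c'_def s_def b_def by simp
  have c'L: "c' a < L" if "a \<in> {1..n}" for a using c'a[of a] sL good_lt[OF g that] by auto
  have c'inj: "c' a = c' l \<longleftrightarrow> a = l" if a: "a \<in> {1..n}" and l: "l \<in> {1..n}" for a l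
    using c'a[of a] c'a[of l] cs[OF a] cs[OF l] good_inj[OF g a l] by auto
  have fs: "fwd L s x = fwd L b x - 1" if "x < L" "x \<noteq> b" "x \<noteq> s" for x
    using fwd_from_succ[OF bL that(1,2)] that(3) s_def by simp
  have ts: "fwd L y s = fwd L y b + 1" if "y < L" "y \<noteq> b" "y \<noteq> s" for y
    using fwd_succ[OF that(1) bL] that s_def by auto
  have CO': "fwd L (c' a) (c' (nxt n a)) \<le> fwd L (c' a) (c' l)"
    if a: "a \<in> {1..n}" and l: "l \<in> {1..n}" for a l
  proof (cases "a = k")
    case True
    show ?thesis
    proof (cases "n = 1")
      case True
      then have "l = a" "nxt n a = a" using a l by (auto simp: nxt_def)
      then show ?thesis by simp
    next
      case False
      then have nkk: "nxt n k \<noteq> k" using nxt_eq_self[OF k] by simp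
      show ?thesis
      proof (cases "l = k")
        case True
        then show ?thesis using \<open>a = k\<close> fwd_le[OF c'L[OF nxt_in[OF a]] c'L[OF a]] fwd_self[OF c'L[OF a]]
          using fwd_le c'L a nxt_in by metis
      next
        case False
        have "fwd L (c' a) (c' (nxt n a)) = fwd L b (c (nxt n k)) - 1"
          using \<open>a = k\<close> nkk c'a fs[OF good_lt[OF g nk]] good_inj[OF g nk k] cs[OF nk] b_def by simp
        moreover have "fwd L (c' a) (c' l) = fwd L b (c l) - 1"
          using \<open>a = k\<close> False c'a fs[OF good_lt[OF g l]] good_inj[OF g l k] cs[OF l] b_def by simp
        moreover have "fwd L b (c (nxt n k)) \<le> fwd L b (c l)" using good_CO[OF g k l] b_def by simp
        ultimately show ?thesis by simp
      qed
    qed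
  next
    case ak: False
    show ?thesis
    proof (cases "nxt n a = k")
      case True
      show ?thesis
      proof (cases "l = k")
        case True then show ?thesis using \<open>nxt n a = k\<close> by simp
      next
        case False
        have ca: "c a \<noteq> b" using good_inj[OF g a k] ak b_def by simp
        have "fwd L (c' a) (c' (nxt n a)) = fwd L (c a) b + 1"
          using True ak c'a ts[OF good_lt[OF g a] ca cs[OF a]] by simp
        moreover have "fwd L (c' a) (c' l) = fwd L (c a) (c l)"
          using ak False c'a by simp
        moreover have "fwd L (c a) b \<le> fwd L (c a) (c l)" using good_CO[OF g a l] True b_def by simp
        moreover have "fwd L (c a) b \<noteq> fwd L (c a) (c l)"
          using fwd_inj[OF good_lt[OF g a] bL good_lt[OF g l]] good_inj[OF g k l] False b_def by auto
        ultimately show ?thesis by simp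
      qed
    next
      case nak: False
      show ?thesis
      proof (cases "l = k")
        case False then show ?thesis using ak nak c'a good_CO[OF g a l] by simp
      next
        case True
        have ca: "c a \<noteq> b" using good_inj[OF g a k] ak b_def by simp
        have "fwd L (c' a) (c' l) = fwd L (c a) b + 1"
          using True ak c'a ts[OF good_lt[OF g a] ca cs[OF a]] by simp
        moreover have "fwd L (c' a) (c' (nxt n a)) = fwd L (c a) (c (nxt n a))"
          using ak nak c'a by simp
        moreover have "fwd L (c a) (c (nxt n a)) \<le> fwd L (c a) b" using good_CO[OF g a k] b_def by simp
        ultimately show ?thesis by simp
      qed
    qed
  qed
  show "good L n c'" unfolding good_def inj_on_def using c'L c'inj CO' by blast
  fix a assume a: "a \<in> {1..n}"
  have na: "nxt n a \<in> {1..n}" using nxt_in[OF a] .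
  show "fwd L (c' a) (c' (nxt n a)) = (if a = k \<and> a = prv n k then fwd L (c a) (c (nxt n a))
        else if a = k then fwd L (c a) (c (nxt n a)) - 1
        else if a = prv n k then fwd L (c a) (c (nxt n a)) + 1
        else fwd L (c a) (c (nxt n a)))"
  proof (cases "a = k")
    case True
    show ?thesis
    proof (cases "n = 1")
      case True
      then have "nxt n a = a" "prv n k = k" using a k by (auto simp: nxt_def prv_def)
      then show ?thesis using \<open>a = k\<close> c'a fwd_self sL good_lt[OF g k] by simp
    next
      case False
      then have nkk: "nxt n k \<noteq> k" "prv n k \<noteq> k" using nxt_eq_self[OF k] prv_eq_self[OF k] by auto
      have "fwd L (c' a) (c' (nxt n a)) = fwd L b (c (nxt n k)) - 1"
        using \<open>a = k\<close> nkk c'a fs[OF good_lt[OF g nk]] good_inj[OF g nk k] cs[OF nk] b_def by simp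
      then show ?thesis using \<open>a = k\<close> nkk b_def by simp
    qed
  next
    case ak: False
    show ?thesis
    proof (cases "a = prv n k")
      case True
      then have nak: "nxt n a = k" using nxt_eq_iff[OF a k] by simp
      have ca: "c a \<noteq> b" using good_inj[OF g a k] ak b_def by simp
      have "fwd L (c' a) (c' (nxt n a)) = fwd L (c a) b + 1"
        using nak ak c'a ts[OF good_lt[OF g a] ca cs[OF a]] by simp
      then show ?thesis using ak True nak b_def by simp
    next
      case False
      then have nak: "nxt n a \<noteq> k" using nxt_eq_iff[OF a k] by simp
      then show ?thesis using ak False c'a by simp
    qed
  qed
qed

lemma posL:
  assumes g: "good L n c" and k: "k \<in> {1..n}" and d: "2 \<le> fwd L (c (prv n k)) (c k)"
  defines "c' \<equiv> c(k := (c k + L - 1) mod L)"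
  shows "good L n c'"
    and "\<And>a. a \<in> {1..n} \<Longrightarrow> fwd L (c' a) (c' (nxt n a)) =
       (if a = k \<and> a = prv n k then fwd L (c a) (c (nxt n a))
        else if a = prv n k then fwd L (c a) (c (nxt n a)) - 1
        else if a = k then fwd L (c a) (c (nxt n a)) + 1
        else fwd L (c a) (c (nxt n a)))"
proof -
  define b where "b = c k"
  define t where "t = (b + L - 1) mod L"
  have pk: "prv n k \<in> {1..n}" using prv_in[OF k] .
  have nk: "nxt n k \<in> {1..n}" using nxt_in[OF k] .
  have bL: "b < L" using good_lt[OF g k] b_def by simp
  have L2: "2 \<le> L" using d fwd_le[OF good_lt[OF g pk] bL] b_def by simp
  have tL: "t < L" using bL t_def by simp
  have ftb: "fwd L t b = 1" using fwd_to_pred[OF bL L2] t_def by simp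
  have tb: "t \<noteq> b" using ftb fwd_self[OF bL] L2 by auto
  have cs: "c l \<noteq> t" if l: "l \<in> {1..n}" for l
  proof
    assume cl: "c l = t"
    show False
    proof (cases "n = 1")
      case True
      then have "l = k" using l k by simp
      then show False using cl tb b_def by simp
    next
      case False
      then have pkk: "prv n k \<noteq> k" using prv_eq_self[OF k] by simp
      have tpk: "c (prv n k) \<noteq> t"
      proof
        assume "c (prv n k) = t"
        then have "fwd L (c (prv n k)) (c k) = 1" using ftb b_def by simp
        then show False using d by simp
      qed
      have bpk: "b \<noteq> c (prv n k)" using good_inj[OF g k pk] pkk b_def by simp
      have "fwd L (c (prv n k)) t = fwd L (c (prv n k)) b - 1"
        using fwd_pred[OF good_lt[OF g pk] bL bpk] tpk[symmetric] t_def by simp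
      moreover have "fwd L (c (prv n k)) (c (nxt n (prv n k))) \<le> fwd L (c (prv n k)) (c l)"
        using good_CO[OF g pk l] .
      ultimately show False using nxt_prv[OF k] cl d b_def by simp
    qed
  qed
  have c'a: "c' a = (if a = k then t else c a)" for a unfolding c'_def t_def b_def by simp
  have c'L: "c' a < L" if "a \<in> {1..n}" for a using c'a[of a] tL good_lt[OF g that] by auto
  have c'inj: "c' a = c' l \<longleftrightarrow> a = l" if a: "a \<in> {1..n}" and l: "l \<in> {1..n}" for a l
    using c'a[of a] c'a[of l] cs[OF a] cs[OF l] good_inj[OF g a l] by auto
  have ft: "fwd L t x = fwd L b x + 1" if "x < L" "x \<noteq> b" "x \<noteq> t" for x
    using fwd_from_pred[OF bL that(1,2)] that(3) t_def by simp
  have tt: "fwd L y t = fwd L y b - 1" if "y < L" "y \<noteq> b" "y \<noteq> t" for y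
    using fwd_pred[OF that(1) bL] that t_def by auto
  have CO': "fwd L (c' a) (c' (nxt n a)) \<le> fwd L (c' a) (c' l)"
    if a: "a \<in> {1..n}" and l: "l \<in> {1..n}" for a l
  proof (cases "a = k")
    case True
    show ?thesis
    proof (cases "n = 1")
      case True
      then have "l = a" "nxt n a = a" using a l by (auto simp: nxt_def)
      then show ?thesis by simp
    next
      case False
      then have nkk: "nxt n k \<noteq> k" using nxt_eq_self[OF k] by simp
      show ?thesis
      proof (cases "l = k")
        case True
        then show ?thesis using \<open>a = k\<close> fwd_le c'L a nxt_in fwd_self by metis
      next
        case False
        have "fwd L (c' a) (c' (nxt n a)) = fwd L b (c (nxt n k)) + 1"
          using \<open>a = k\<close> nkk c'a ft[OF good_lt[OF g nk]] good_inj[OF g nk k] cs[OF nk] b_def by simp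
        moreover have "fwd L (c' a) (c' l) = fwd L b (c l) + 1"
          using \<open>a = k\<close> False c'a ft[OF good_lt[OF g l]] good_inj[OF g l k] cs[OF l] b_def by simp
        moreover have "fwd L b (c (nxt n k)) \<le> fwd L b (c l)" using good_CO[OF g k l] b_def by simp
        ultimately show ?thesis by simp
      qed
    qed
  next
    case ak: False
    have ca: "c a \<noteq> b" using good_inj[OF g a k] ak b_def by simp
    show ?thesis
    proof (cases "nxt n a = k")
      case True
      show ?thesis
      proof (cases "l = k")
        case True then show ?thesis using \<open>nxt n a = k\<close> by simp
      next
        case False
        have "fwd L (c' a) (c' (nxt n a)) = fwd L (c a) b - 1"
          using True ak c'a tt[OF good_lt[OF g a] ca cs[OF a]] by simp
        moreover have "fwd L (c' a) (c' l) = fwd L (c a) (c l)"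
          using ak False c'a by simp
        moreover have "fwd L (c a) b \<le> fwd L (c a) (c l)" using good_CO[OF g a l] True b_def by simp
        ultimately show ?thesis by simp
      qed
    next
      case nak: False
      show ?thesis
      proof (cases "l = k")
        case False then show ?thesis using ak nak c'a good_CO[OF g a l] by simp
      next
        case True
        have "fwd L (c' a) (c' l) = fwd L (c a) b - 1"
          using True ak c'a tt[OF good_lt[OF g a] ca cs[OF a]] by simp
        moreover have "fwd L (c' a) (c' (nxt n a)) = fwd L (c a) (c (nxt n a))"
          using ak nak c'a by simp
        moreover have "fwd L (c a) (c (nxt n a)) \<le> fwd L (c a) b" using good_CO[OF g a k] b_def by simp
        moreover have "fwd L (c a) (c (nxt n a)) \<noteq> fwd L (c a) b"
          using fwd_inj[OF good_lt[OF g a] good_lt[OF g nxt_in[OF a]] bL] good_inj[OF g nxt_in[OF a] k] nak b_def by auto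
        ultimately show ?thesis by simp
      qed
    qed
  qed
  show "good L n c'" unfolding good_def inj_on_def using c'L c'inj CO' by blast
  fix a assume a: "a \<in> {1..n}"
  show "fwd L (c' a) (c' (nxt n a)) = (if a = k \<and> a = prv n k then fwd L (c a) (c (nxt n a))
        else if a = prv n k then fwd L (c a) (c (nxt n a)) - 1
        else if a = k then fwd L (c a) (c (nxt n a)) + 1
        else fwd L (c a) (c (nxt n a)))"
  proof (cases "a = k")
    case True
    show ?thesis
    proof (cases "n = 1")
      case True
      then have "nxt n a = a" "prv n k = k" using a k by (auto simp: nxt_def prv_def)
      then show ?thesis using \<open>a = k\<close> c'a fwd_self tL good_lt[OF g k] by simp
    next
      case False
      then have nkk: "nxt n k \<noteq> k" "prv n k \<noteq> k" using nxt_eq_self[OF k] prv_eq_self[OF k] by auto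
      have "fwd L (c' a) (c' (nxt n a)) = fwd L b (c (nxt n k)) + 1"
        using \<open>a = k\<close> nkk c'a ft[OF good_lt[OF g nk]] good_inj[OF g nk k] cs[OF nk] b_def by simp
      then show ?thesis using \<open>a = k\<close> nkk b_def by simp
    qed
  next
    case ak: False
    have ca: "c a \<noteq> b" using good_inj[OF g a k] ak b_def by simp
    show ?thesis
    proof (cases "a = prv n k")
      case True
      then have nak: "nxt n a = k" using nxt_eq_iff[OF a k] by simp
      have "fwd L (c' a) (c' (nxt n a)) = fwd L (c a) b - 1"
        using nak ak c'a tt[OF good_lt[OF g a] ca cs[OF a]] by simp
      then show ?thesis using ak True nak b_def by simp
    next
      case False
      then have nak: "nxt n a \<noteq> k" using nxt_eq_iff[OF a k] by simp
      then show ?thesis using ak False c'a by simp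
    qed
  qed
qed


lemma pred_eq_iff:
  assumes "x < L" "(y::nat) < L"
  shows "(x + L - 1) mod L = y \<longleftrightarrow> x = (y + 1) mod L"
proof (cases "x = 0")
  case True
  then have e: "(x + L - 1) mod L = L - 1" using assms mod_pred[of x L] by simp
  show ?thesis
  proof (cases "y + 1 = L")
    case True then show ?thesis using e \<open>x = 0\<close> by simp
  next
    case False
    then have "(y + 1) mod L = y + 1" using assms by simp
    then show ?thesis using e \<open>x = 0\<close> False assms by auto
  qed
next
  case False
  then have e: "(x + L - 1) mod L = x - 1" using assms mod_pred[of x L] by simp
  show ?thesis
  proof (cases "y + 1 = L")
    case True then show ?thesis using e False assms by auto
  next
    case F2: False
    then have "(y + 1) mod L = y + 1" using assms by simp
    then show ?thesis using e False F2 assms by auto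
  qed
qed

lemma Omega_facts:
  assumes "w \<in> Omega L n"
  shows "length w = L" "good L n (bpos w)"
    "\<And>x m. x < L \<Longrightarrow> w ! x = letter.Ball m \<longleftrightarrow> m \<in> {1..n} \<and> x = bpos w m"
    "\<And>x. x < L \<Longrightarrow> valid n (w ! x)"
  using Omega_D[OF assms] unfolding BC_def by auto

lemma Omega_box:
  assumes w: "w \<in> Omega L n" and x: "x < L" and nb: "\<And>m. m \<in> {1..n} \<Longrightarrow> x \<noteq> bpos w m"
  shows "\<exists>i\<in>{1..n}. w ! x = Box i"
proof -
  have "valid n (w ! x)" using Omega_facts(4)[OF w x] .
  moreover have "\<not> (\<exists>k\<in>{1..n}. w ! x = letter.Ball k)"
    using Omega_facts(3)[OF w x] nb by blast
  ultimately show ?thesis unfolding valid_def by blast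
qed

lemma target_Omega:
  assumes "length t = L" "\<And>x. x < L \<Longrightarrow> valid n (t ! x)" "good L n c'"
    "\<And>x m. x < L \<Longrightarrow> t ! x = letter.Ball m \<longleftrightarrow> m \<in> {1..n} \<and> x = c' m"
  shows "t \<in> Omega L n" "\<And>a. a \<in> {1..n} \<Longrightarrow> bpos t a = c' a"
proof -
  have bc: "BC n t c'" unfolding BC_def using assms(1,4) by auto
  show "t \<in> Omega L n" using Omega_I[OF assms(1) _ assms(3) bc] assms(2) by blast
  fix a assume "a \<in> {1..n}"
  then show "bpos t a = c' a" using bpos_eq[OF bc] assms(1,3) by simp
qed

lemma valid_Box: "i \<in> {1..n} \<Longrightarrow> valid n (Box i)" unfolding valid_def by blast
lemma valid_Ball: "i \<in> {1..n} \<Longrightarrow> valid n (letter.Ball i)" unfolding valid_def by blast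

lemma swap_target:
  assumes w: "w \<in> Omega L n" and k: "k \<in> {1..n}"
    and d: "2 \<le> fwd L (bpos w k) (bpos w (nxt n k))"
    and i: "w ! ((bpos w k + 1) mod L) = Box i" "i \<in> {1..n}"
  defines "c' \<equiv> (bpos w)(k := (bpos w k + 1) mod L)"
  shows "swap_pos w (bpos w k) ((bpos w k + 1) mod L) \<in> Omega L n"
    "\<And>a. a \<in> {1..n} \<Longrightarrow> bpos (swap_pos w (bpos w k) ((bpos w k + 1) mod L)) a = c' a"
proof -
  define c where "c = bpos w"
  define b where "b = c k"
  define s where "s = (b + 1) mod L"
  note F = Omega_facts[OF w, folded c_def]
  have g: "good L n c" using F(2) .
  have bL: "b < L" using good_lt[OF g k] b_def by simp
  have L2: "2 \<le> L" using d fwd_le[OF bL good_lt[OF g nxt_in[OF k]]] b_def c_def by simp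
  have sL: "s < L" using bL s_def by simp
  have fbs: "fwd L b s = 1" using fwd_to_succ[OF bL L2] s_def by simp
  have cs: "c l \<noteq> s" if l: "l \<in> {1..n}" for l
  proof
    assume "c l = s"
    then have "fwd L b (c l) = 1" using fbs by simp
    then show False using good_CO[OF g k l] d b_def c_def by simp
  qed
  have sb: "s \<noteq> b" using fbs fwd_self[OF bL] L2 by auto
  have gc': "good L n c'" using posR(1)[OF g k] d unfolding c'_def c_def by simp
  have c'a: "c' a = (if a = k then s else c a)" for a unfolding c'_def s_def b_def c_def by simp
  define t where "t = swap_pos w b s"
  have len: "length t = L" unfolding t_def swap_pos_def using F(1) by simp
  have wb: "w ! b = letter.Ball k" using F(3)[OF bL] k b_def by simp
  have tx: "t ! x = (if x = s then letter.Ball k else if x = b then Box i else w ! x)" if "x < L" for x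
    unfolding t_def swap_pos_def using that F(1) sL bL wb i(1) s_def b_def c_def by (auto simp: nth_list_update)
  have val: "valid n (t ! x)" if "x < L" for x
    using tx[OF that] F(4)[OF that] valid_Box[OF i(2)] valid_Ball[OF k] by auto
  have ball: "t ! x = letter.Ball m \<longleftrightarrow> m \<in> {1..n} \<and> x = c' m" if x: "x < L" for x m
  proof (cases "x = s")
    case True
    then show ?thesis using tx[OF x] c'a cs k by auto
  next
    case xs: False
    show ?thesis
    proof (cases "x = b")
      case True
      have "x \<noteq> c' m" if "m \<in> {1..n}" for m
        using c'a[of m] True sb good_inj[OF g that k] b_def by auto
      then show ?thesis using tx[OF x] xs True by auto
    next
      case False
      have "x = c' m \<longleftrightarrow> x = c m" for m using c'a[of m] xs False b_def by auto
      then show ?thesis using tx[OF x] xs False F(3)[OF x] by auto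
    qed
  qed
  note R = target_Omega[OF len val gc' ball]
  show "swap_pos w (bpos w k) ((bpos w k + 1) mod L) \<in> Omega L n"
    using R(1) unfolding t_def s_def b_def c_def .
  fix a assume "a \<in> {1..n}"
  then show "bpos (swap_pos w (bpos w k) ((bpos w k + 1) mod L)) a = c' a"
    using R(2) unfolding t_def s_def b_def c_def by simp
qed

lemma t2_nth:
  assumes "x < length w"
  shows "t2 n w k ! x = (let L = length w; bk = bpos w k; bp = bpos w (prv n k); g = fwd L bp bk in
     if x = (bk + 1) mod L then letter.Ball k
     else if x = (bp + 1) mod L then Box (prv n k)
     else if 2 \<le> fwd L bp x \<and> fwd L bp x \<le> g then w ! ((x + L - 1) mod L)
     else w ! x)"
  using assms unfolding t2_def Let_def by simp

lemma t2_target: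
  assumes w: "w \<in> Omega L n" and k: "k \<in> {1..n}"
    and d: "2 \<le> fwd L (bpos w k) (bpos w (nxt n k))"
  defines "c' \<equiv> (bpos w)(k := (bpos w k + 1) mod L)"
  shows "t2 n w k \<in> Omega L n"
    "\<And>a. a \<in> {1..n} \<Longrightarrow> bpos (t2 n w k) a = c' a"
proof -
  define c where "c = bpos w"
  define b where "b = c k"
  define s where "s = (b + 1) mod L"
  define pk where "pk = prv n k"
  define bp where "bp = c pk"
  define u where "u = (bp + 1) mod L"
  define g0 where "g0 = fwd L bp b"
  note F = Omega_facts[OF w, folded c_def]
  have g: "good L n c" using F(2) .
  have pkn: "pk \<in> {1..n}" using prv_in[OF k] pk_def by simp
  have npk: "nxt n pk = k" using nxt_prv[OF k] pk_def by simp
  have bL: "b < L" using good_lt[OF g k] b_def by simp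
  have bpL: "bp < L" using good_lt[OF g pkn] bp_def by simp
  have L2: "2 \<le> L" using d fwd_le[OF bL good_lt[OF g nxt_in[OF k]]] b_def c_def by simp
  have sL: "s < L" using bL s_def by simp
  have uL: "u < L" using bpL u_def by simp
  have fbs: "fwd L b s = 1" using fwd_to_succ[OF bL L2] s_def by simp
  have fbu: "fwd L bp u = 1" using fwd_to_succ[OF bpL L2] u_def by simp
  have cs: "c l \<noteq> s" if l: "l \<in> {1..n}" for l
  proof
    assume "c l = s"
    then have "fwd L b (c l) = 1" using fbs by simp
    then show False using good_CO[OF g k l] d b_def c_def by simp
  qed
  have sb: "s \<noteq> b" using fbs fwd_self[OF bL] L2 by auto
  have COp: "g0 \<le> fwd L bp (c m)" if "m \<in> {1..n}" for m
    using good_CO[OF g pkn that] npk g0_def bp_def b_def by simp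
  have gc': "good L n c'" using posR(1)[OF g k] d unfolding c'_def c_def by simp
  have c'a: "c' a = (if a = k then s else c a)" for a unfolding c'_def s_def b_def c_def by simp
  define t where "t = t2 n w k"
  have len: "length t = L" unfolding t_def t2_def Let_def using F(1) by simp
  have tx: "t ! x = (if x = s then letter.Ball k else if x = u then Box pk
      else if 2 \<le> fwd L bp x \<and> fwd L bp x \<le> g0 then w ! ((x + L - 1) mod L) else w ! x)"
    if "x < L" for x
    unfolding t_def using t2_nth[of x w n k] that F(1)
    unfolding s_def b_def c_def u_def bp_def pk_def g0_def Let_def by simp
  have u_ball: "u = c m \<Longrightarrow> m \<in> {1..n} \<Longrightarrow> m = k" for m
  proof -
    assume um: "u = c m" and m: "m \<in> {1..n}"
    have "g0 \<le> 1" using COp[OF m] um fbu by simp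
    then have "g0 = fwd L bp (c m)" using fbu um fwd_pos[OF bpL bL] g0_def by simp
    then have "b = c m" using fwd_inj[OF bpL bL good_lt[OF g m]] g0_def by simp
    then show "m = k" using good_inj[OF g k m] b_def by simp
  qed
  have seg_nb: "(x + L - 1) mod L \<noteq> c m"
    if x: "x < L" "x \<noteq> s" "x \<noteq> u" "2 \<le> fwd L bp x" "fwd L bp x \<le> g0" and m: "m \<in> {1..n}" for x m
  proof (cases "n = 1")
    case True
    then have "m = k" using m k by simp
    show ?thesis
    proof
      assume "(x + L - 1) mod L = c m"
      then have "x = s" using pred_eq_iff[OF x(1) bL] \<open>m = k\<close> b_def s_def by simp
      then show False using x(2) by simp
    qed
  next
    case False
    then have pkk: "pk \<noteq> k" using prv_eq_self[OF k] pk_def by simp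
    have bbp: "b \<noteq> bp" using good_inj[OF g k pkn] pkk b_def bp_def by simp
    have "g0 < L" using fwd_ltL[OF bpL bL] bbp g0_def by simp
    then have xbp: "x \<noteq> bp" using x(5) fwd_self[OF bpL] by auto
    have ybp: "(x + L - 1) mod L \<noteq> bp"
    proof
      assume "(x + L - 1) mod L = bp"
      then have "x = u" using pred_eq_iff[OF x(1) bpL] u_def by simp
      then show False using x(3) by simp
    qed
    have "fwd L bp ((x + L - 1) mod L) = fwd L bp x - 1"
      using fwd_pred[OF bpL x(1) xbp ybp] .
    then have "fwd L bp ((x + L - 1) mod L) < g0" using x(4,5) by simp
    then show ?thesis using COp[OF m] by auto
  qed
  have seg_nc: "x \<noteq> c m"
    if x: "x < L" "x \<noteq> s" "2 \<le> fwd L bp x" "fwd L bp x \<le> g0" and m: "m \<in> {1..n}" "m \<noteq> k" for x m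
  proof
    assume xm: "x = c m"
    then have "fwd L bp x = g0" using COp[OF m(1)] x(4) by simp
    then have "x = b" using fwd_inj[OF bpL x(1) bL] g0_def by simp
    then show False using xm good_inj[OF g k m(1)] m(2) b_def by simp
  qed
  have val: "valid n (t ! x)" if x: "x < L" for x
  proof -
    have "(x + L - 1) mod L < L" using x by simp
    then have "x \<noteq> s \<Longrightarrow> x \<noteq> u \<Longrightarrow> 2 \<le> fwd L bp x \<Longrightarrow> fwd L bp x \<le> g0 \<Longrightarrow>
        valid n (w ! ((x + L - 1) mod L))" using F(4) by simp
    then show ?thesis using tx[OF x] F(4)[OF x] valid_Box[OF pkn] valid_Ball[OF k] by auto
  qed
  have ball: "t ! x = letter.Ball m \<longleftrightarrow> m \<in> {1..n} \<and> x = c' m" if x: "x < L" for x m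
  proof (cases "x = s")
    case True
    then show ?thesis using tx[OF x] c'a cs k by auto
  next
    case xs: False
    show ?thesis
    proof (cases "x = u")
      case True
      have "x \<noteq> c' m" if "m \<in> {1..n}" for m
        using c'a[of m] True xs u_ball[OF _ that] by auto
      then show ?thesis using tx[OF x] xs True by auto
    next
      case xu: False
      show ?thesis
      proof (cases "2 \<le> fwd L bp x \<and> fwd L bp x \<le> g0")
        case True
        have y: "(x + L - 1) mod L < L" using x by simp
        have nb: "w ! ((x + L - 1) mod L) \<noteq> letter.Ball m" for m
          using F(3)[OF y] seg_nb[OF x xs xu] True by auto
        have "x \<noteq> c' m" if "m \<in> {1..n}" for m
          using c'a[of m] xs seg_nc[OF x xs _ _ that] True by auto
        then show ?thesis using tx[OF x] xs xu True nb by auto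
      next
        case False
        have xb: "x \<noteq> b"
        proof
          assume "x = b"
          then have "g0 < 2" using False g0_def by simp
          then have "g0 = 1" using fwd_pos[OF bpL bL] g0_def by simp
          then have "b = u" using fbu fwd_inj[OF bpL bL uL] g0_def by simp
          then show False using \<open>x = b\<close> xu by simp
        qed
        have "x = c' m \<longleftrightarrow> x = c m" for m using c'a[of m] xs xb b_def by auto
        then show ?thesis using tx[OF x] xs xu False F(3)[OF x] by auto
      qed
    qed
  qed
  note R = target_Omega[OF len val gc' ball]
  show "t2 n w k \<in> Omega L n" using R(1) unfolding t_def .
  fix a assume "a \<in> {1..n}"
  then show "bpos (t2 n w k) a = c' a" using R(2) unfolding t_def by simp
qed

lemma pred_nb:
  assumes g: "good L n c" and k: "k \<in> {1..n}" and d: "2 \<le> fwd L (c (prv n k)) (c k)"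
    and l: "l \<in> {1..n}"
  shows "c l \<noteq> (c k + L - 1) mod L"
proof -
  define b where "b = c k"
  define t where "t = (b + L - 1) mod L"
  have pk: "prv n k \<in> {1..n}" using prv_in[OF k] .
  have bL: "b < L" using good_lt[OF g k] b_def by simp
  have L2: "2 \<le> L" using d fwd_le[OF good_lt[OF g pk] bL] b_def by simp
  have ftb: "fwd L t b = 1" using fwd_to_pred[OF bL L2] t_def by simp
  have tb: "t \<noteq> b" using ftb fwd_self[OF bL] L2 by auto
  have "c l \<noteq> t"
  proof
    assume cl: "c l = t"
    show False
    proof (cases "n = 1")
      case True
      then have "l = k" using l k by simp
      then show False using cl tb b_def by simp
    next
      case False
      then have pkk: "prv n k \<noteq> k" using prv_eq_self[OF k] by simp
      have tpk: "c (prv n k) \<noteq> t"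
      proof
        assume "c (prv n k) = t"
        then have "fwd L (c (prv n k)) (c k) = 1" using ftb b_def by simp
        then show False using d by simp
      qed
      have bpk: "b \<noteq> c (prv n k)" using good_inj[OF g k pk] pkk b_def by simp
      have "fwd L (c (prv n k)) t = fwd L (c (prv n k)) b - 1"
        using fwd_pred[OF good_lt[OF g pk] bL bpk] tpk[symmetric] t_def by simp
      moreover have "fwd L (c (prv n k)) (c (nxt n (prv n k))) \<le> fwd L (c (prv n k)) (c l)"
        using good_CO[OF g pk l] .
      ultimately show False using nxt_prv[OF k] cl d b_def by simp
    qed
  qed
  then show ?thesis unfolding t_def b_def .
qed

lemma swapL_target:
  assumes w: "w \<in> Omega L n" and k: "k \<in> {1..n}"
    and d: "2 \<le> fwd L (bpos w (prv n k)) (bpos w k)"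
    and i: "w ! ((bpos w k + L - 1) mod L) = Box i" "i \<in> {1..n}"
  defines "c' \<equiv> (bpos w)(k := (bpos w k + L - 1) mod L)"
  shows "swap_pos w (bpos w k) ((bpos w k + L - 1) mod L) \<in> Omega L n"
    "\<And>a. a \<in> {1..n} \<Longrightarrow> bpos (swap_pos w (bpos w k) ((bpos w k + L - 1) mod L)) a = c' a"
proof -
  define c where "c = bpos w"
  define b where "b = c k"
  define s where "s = (b + L - 1) mod L"
  note F = Omega_facts[OF w, folded c_def]
  have g: "good L n c" using F(2) .
  have pk: "prv n k \<in> {1..n}" using prv_in[OF k] .
  have bL: "b < L" using good_lt[OF g k] b_def by simp
  have L2: "2 \<le> L" using d fwd_le[OF good_lt[OF g pk] bL] b_def c_def by simp
  have sL: "s < L" using bL s_def by simp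
  have cs: "c l \<noteq> s" if l: "l \<in> {1..n}" for l
    using pred_nb[OF g k _ l] d unfolding s_def b_def c_def by simp
  have sb: "s \<noteq> b" using cs[OF k] b_def by simp
  have gc': "good L n c'" using posL(1)[OF g k] d unfolding c'_def c_def by simp
  have c'a: "c' a = (if a = k then s else c a)" for a unfolding c'_def s_def b_def c_def by simp
  define t where "t = swap_pos w b s"
  have len: "length t = L" unfolding t_def swap_pos_def using F(1) by simp
  have wb: "w ! b = letter.Ball k" using F(3)[OF bL] k b_def by simp
  have tx: "t ! x = (if x = s then letter.Ball k else if x = b then Box i else w ! x)" if "x < L" for x
    unfolding t_def swap_pos_def using that F(1) sL bL wb i(1) s_def b_def c_def by (auto simp: nth_list_update)
  have val: "valid n (t ! x)" if "x < L" for x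
    using tx[OF that] F(4)[OF that] valid_Box[OF i(2)] valid_Ball[OF k] by auto
  have ball: "t ! x = letter.Ball m \<longleftrightarrow> m \<in> {1..n} \<and> x = c' m" if x: "x < L" for x m
  proof (cases "x = s")
    case True
    then show ?thesis using tx[OF x] c'a cs k by auto
  next
    case xs: False
    show ?thesis
    proof (cases "x = b")
      case True
      have "x \<noteq> c' m" if "m \<in> {1..n}" for m
        using c'a[of m] True sb good_inj[OF g that k] b_def by auto
      then show ?thesis using tx[OF x] xs True by auto
    next
      case False
      have "x = c' m \<longleftrightarrow> x = c m" for m using c'a[of m] xs False b_def by auto
      then show ?thesis using tx[OF x] xs False F(3)[OF x] by auto
    qed
  qed
  note R = target_Omega[OF len val gc' ball]
  show "swap_pos w (bpos w k) ((bpos w k + L - 1) mod L) \<in> Omega L n"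
    using R(1) unfolding t_def s_def b_def c_def .
  fix a assume "a \<in> {1..n}"
  then show "bpos (swap_pos w (bpos w k) ((bpos w k + L - 1) mod L)) a = c' a"
    using R(2) unfolding t_def s_def b_def c_def by simp
qed

lemma t4_nth:
  assumes "x < length w"
  shows "t4 n w k ! x = (let L = length w; bk = bpos w k; bn = bpos w (nxt n k); g = fwd L bk bn in
     if x = (bk + L - 1) mod L then letter.Ball k
     else if x = (bn + L - 1) mod L then Box (nxt n k)
     else if x = bk \<or> fwd L bk x + 2 \<le> g then w ! ((x + 1) mod L)
     else w ! x)"
  using assms unfolding t4_def Let_def by simp

lemma t4_target:
  assumes w: "w \<in> Omega L n" and k: "k \<in> {1..n}"
    and d: "2 \<le> fwd L (bpos w (prv n k)) (bpos w k)"
  defines "c' \<equiv> (bpos w)(k := (bpos w k + L - 1) mod L)"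
  shows "t4 n w k \<in> Omega L n"
    "\<And>a. a \<in> {1..n} \<Longrightarrow> bpos (t4 n w k) a = c' a"
proof -
  define c where "c = bpos w"
  define b where "b = c k"
  define s where "s = (b + L - 1) mod L"
  define nk where "nk = nxt n k"
  define bn where "bn = c nk"
  define v where "v = (bn + L - 1) mod L"
  define g0 where "g0 = fwd L b bn"
  note F = Omega_facts[OF w, folded c_def]
  have g: "good L n c" using F(2) .
  have pk: "prv n k \<in> {1..n}" using prv_in[OF k] .
  have nkn: "nk \<in> {1..n}" using nxt_in[OF k] nk_def by simp
  have bL: "b < L" using good_lt[OF g k] b_def by simp
  have bnL: "bn < L" using good_lt[OF g nkn] bn_def by simp
  have L2: "2 \<le> L" using d fwd_le[OF good_lt[OF g pk] bL] b_def c_def by simp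
  have sL: "s < L" using bL s_def by simp
  have vL: "v < L" using bnL v_def by simp
  have cs: "c l \<noteq> s" if l: "l \<in> {1..n}" for l
    using pred_nb[OF g k _ l] d unfolding s_def b_def c_def by simp
  have sb: "s \<noteq> b" using cs[OF k] b_def by simp
  have COk: "g0 \<le> fwd L b (c m)" if "m \<in> {1..n}" for m
    using good_CO[OF g k that] g0_def b_def bn_def nk_def by simp
  have gc': "good L n c'" using posL(1)[OF g k] d unfolding c'_def c_def by simp
  have c'a: "c' a = (if a = k then s else c a)" for a unfolding c'_def s_def b_def c_def by simp
  define t where "t = t4 n w k"
  have len: "length t = L" unfolding t_def t4_def Let_def using F(1) by simp
  have tx: "t ! x = (if x = s then letter.Ball k else if x = v then Box nk
      else if x = b \<or> fwd L b x + 2 \<le> g0 then w ! ((x + 1) mod L) else w ! x)"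
    if "x < L" for x
    unfolding t_def using t4_nth[of x w n k] that F(1)
    unfolding s_def b_def c_def v_def bn_def nk_def g0_def Let_def by simp
  have g01: "g0 = 1 \<Longrightarrow> v = b"
  proof -
    assume "g0 = 1"
    have sl: "(b + 1) mod L < L" using bL by simp
    have "fwd L b bn = fwd L b ((b + 1) mod L)" using fwd_to_succ[OF bL L2] \<open>g0 = 1\<close> g0_def by simp
    then have "bn = (b + 1) mod L" using fwd_inj[OF bL bnL sl] by blast
    then show "v = b" using pred_eq_iff[OF bnL bL] v_def by simp
  qed
  have v_ball: "v = c m \<Longrightarrow> m \<in> {1..n} \<Longrightarrow> m = k" for m
  proof (rule ccontr)
    assume vm: "v = c m" and m: "m \<in> {1..n}" and mk: "m \<noteq> k"
    show False
    proof (cases "n = 1")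
      case True
      then show False using mk m k by simp
    next
      case False
      then have "nk \<noteq> k" using nxt_eq_self[OF k] nk_def by simp
      then have bnb: "bn \<noteq> b" using good_inj[OF g nkn k] bn_def b_def by simp
      have vb: "v \<noteq> b" using vm good_inj[OF g m k] mk b_def by simp
      have "fwd L b v = g0 - 1" using fwd_pred[OF bL bnL bnb] vb v_def g0_def by simp
      moreover have "1 \<le> g0" using fwd_pos[OF bL bnL] g0_def by simp
      ultimately show False using COk[OF m] vm by simp
    qed
  qed
  have seg_nb: "(x + 1) mod L \<noteq> c m"
    if x: "x < L" "x \<noteq> s" "x \<noteq> v" "x = b \<or> fwd L b x + 2 \<le> g0" and m: "m \<in> {1..n}" for x m
  proof -
    have "fwd L b ((x + 1) mod L) < g0"
    proof (cases "x = b")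
      case True
      then have "g0 \<noteq> 1" using g01 x(3) by auto
      moreover have "1 \<le> g0" using fwd_pos[OF bL bnL] g0_def by simp
      ultimately show ?thesis using fwd_to_succ[OF bL L2] True by simp
    next
      case False
      have yb: "(x + 1) mod L \<noteq> b"
      proof
        assume "(x + 1) mod L = b"
        then have "x = s" using pred_eq_iff[OF bL x(1)] s_def by simp
        then show False using x(2) by simp
      qed
      have "fwd L b ((x + 1) mod L) = fwd L b x + 1" using fwd_succ[OF bL x(1) False yb] .
      then show ?thesis using x(4) False by simp
    qed
    then show ?thesis using COk[OF m] by auto
  qed
  have seg_nc: "x \<noteq> c m"
    if x: "x < L" "x = b \<or> fwd L b x + 2 \<le> g0" and m: "m \<in> {1..n}" "m \<noteq> k" for x m
  proof
    assume xm: "x = c m"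
    show False
    proof (cases "x = b")
      case True then show False using xm good_inj[OF g k m(1)] m(2) b_def by simp
    next
      case False then show False using x(2) COk[OF m(1)] xm by simp
    qed
  qed
  have val: "valid n (t ! x)" if x: "x < L" for x
  proof -
    have "(x + 1) mod L < L" using x by simp
    then have "valid n (w ! ((x + 1) mod L))" using F(4) by simp
    then show ?thesis using tx[OF x] F(4)[OF x] valid_Box[OF nkn] valid_Ball[OF k] by auto
  qed
  have ball: "t ! x = letter.Ball m \<longleftrightarrow> m \<in> {1..n} \<and> x = c' m" if x: "x < L" for x m
  proof (cases "x = s")
    case True
    then show ?thesis using tx[OF x] c'a cs k by auto
  next
    case xs: False
    show ?thesis
    proof (cases "x = v")
      case True
      have "x \<noteq> c' m" if "m \<in> {1..n}" for m
        using c'a[of m] True xs v_ball[OF _ that] by auto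
      then show ?thesis using tx[OF x] xs True by auto
    next
      case xv: False
      show ?thesis
      proof (cases "x = b \<or> fwd L b x + 2 \<le> g0")
        case True
        have y: "(x + 1) mod L < L" using x by simp
        have nb: "w ! ((x + 1) mod L) \<noteq> letter.Ball m" for m
          using F(3)[OF y] seg_nb[OF x xs xv True] by auto
        have "x \<noteq> c' m" if "m \<in> {1..n}" for m
          using c'a[of m] xs seg_nc[OF x True that] by auto
        then show ?thesis using tx[OF x] xs xv True nb by auto
      next
        case False
        then have xb: "x \<noteq> b" by auto
        have "x = c' m \<longleftrightarrow> x = c m" for m using c'a[of m] xs xb b_def by auto
        then show ?thesis using tx[OF x] xs xv False F(3)[OF x] by auto
      qed
    qed
  qed
  note R = target_Omega[OF len val gc' ball]
  show "t4 n w k \<in> Omega L n" using R(1) unfolding t_def .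
  fix a assume "a \<in> {1..n}"
  then show "bpos (t4 n w k) a = c' a" using R(2) unfolding t_def by simp
qed


definition gv :: "nat \<Rightarrow> letter list \<Rightarrow> nat \<Rightarrow> nat" where
  "gv n w = (\<lambda>a\<in>{1..n}. fwd (length w) (bpos w a) (bpos w (nxt n a)) - 1)"

definition mv :: "nat \<Rightarrow> nat \<Rightarrow> nat \<Rightarrow> (nat \<Rightarrow> nat) \<Rightarrow> nat \<Rightarrow> nat" where
  "mv n a b g = (\<lambda>j\<in>{1..n}. g j - (if j = a then 1 else 0) + (if j = b then 1 else 0))"

lemma gv_mvR:
  assumes w: "w \<in> Omega L n" and t: "t \<in> Omega L n" and k: "k \<in> {1..n}"
    and d: "2 \<le> fwd L (bpos w k) (bpos w (nxt n k))"
    and bt: "\<And>a. a \<in> {1..n} \<Longrightarrow> bpos t a = ((bpos w)(k := (bpos w k + 1) mod L)) a"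
  shows "gv n t = mv n k (prv n k) (gv n w)"
proof (rule ext)
  fix a
  note F = Omega_facts[OF w]
  note P = posR(2)[OF F(2) k d]
  show "gv n t a = mv n k (prv n k) (gv n w) a"
  proof (cases "a \<in> {1..n}")
    case False then show ?thesis unfolding gv_def mv_def restrict_def by (simp del: atLeastAtMost_iff)
  next
    case a: True
    have e: "fwd L (bpos t a) (bpos t (nxt n a)) = fwd L (((bpos w)(k := (bpos w k + 1) mod L)) a)
        (((bpos w)(k := (bpos w k + 1) mod L)) (nxt n a))"
      using bt[OF a] bt[OF nxt_in[OF a]] by simp
    have pos: "1 \<le> fwd L (bpos w a) (bpos w (nxt n a))"
      using fwd_pos good_lt[OF F(2) a] good_lt[OF F(2) nxt_in[OF a]] by blast
    have "gv n t a = fwd L (bpos t a) (bpos t (nxt n a)) - 1"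
      unfolding gv_def using a Omega_facts(1)[OF t] by simp
    also have "\<dots> = (if a = k \<and> a = prv n k then fwd L (bpos w a) (bpos w (nxt n a))
        else if a = k then fwd L (bpos w a) (bpos w (nxt n a)) - 1
        else if a = prv n k then fwd L (bpos w a) (bpos w (nxt n a)) + 1
        else fwd L (bpos w a) (bpos w (nxt n a))) - 1" using e P[OF a] by simp
    also have "\<dots> = mv n k (prv n k) (gv n w) a"
      unfolding mv_def gv_def using a F(1) pos d by auto
    finally show ?thesis .
  qed
qed

lemma gv_mvL:
  assumes w: "w \<in> Omega L n" and t: "t \<in> Omega L n" and k: "k \<in> {1..n}"
    and d: "2 \<le> fwd L (bpos w (prv n k)) (bpos w k)"
    and bt: "\<And>a. a \<in> {1..n} \<Longrightarrow> bpos t a = ((bpos w)(k := (bpos w k + L - 1) mod L)) a"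
  shows "gv n t = mv n (prv n k) k (gv n w)"
proof (rule ext)
  fix a
  note F = Omega_facts[OF w]
  note P = posL(2)[OF F(2) k d]
  show "gv n t a = mv n (prv n k) k (gv n w) a"
  proof (cases "a \<in> {1..n}")
    case False then show ?thesis unfolding gv_def mv_def restrict_def by (simp del: atLeastAtMost_iff)
  next
    case a: True
    have e: "fwd L (bpos t a) (bpos t (nxt n a)) = fwd L (((bpos w)(k := (bpos w k + L - 1) mod L)) a)
        (((bpos w)(k := (bpos w k + L - 1) mod L)) (nxt n a))"
      using bt[OF a] bt[OF nxt_in[OF a]] by simp
    have pos: "1 \<le> fwd L (bpos w a) (bpos w (nxt n a))"
      using fwd_pos good_lt[OF F(2) a] good_lt[OF F(2) nxt_in[OF a]] by blast
    have d': "a = prv n k \<Longrightarrow> 2 \<le> fwd L (bpos w a) (bpos w (nxt n a))"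
      using d nxt_prv[OF k] by simp
    have "gv n t a = fwd L (bpos t a) (bpos t (nxt n a)) - 1"
      unfolding gv_def using a Omega_facts(1)[OF t] by simp
    also have "\<dots> = (if a = k \<and> a = prv n k then fwd L (bpos w a) (bpos w (nxt n a))
        else if a = prv n k then fwd L (bpos w a) (bpos w (nxt n a)) - 1
        else if a = k then fwd L (bpos w a) (bpos w (nxt n a)) + 1
        else fwd L (bpos w a) (bpos w (nxt n a))) - 1" using e P[OF a] by simp
    also have "\<dots> = mv n (prv n k) k (gv n w) a"
      unfolding mv_def gv_def using a F(1) pos d' by auto
    finally show ?thesis .
  qed
qed

lemma gv_at: "w \<in> Omega L n \<Longrightarrow> a \<in> {1..n} \<Longrightarrow> gv n w a = fwd L (bpos w a) (bpos w (nxt n a)) - 1"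
  unfolding gv_def using Omega_facts(1) by simp

lemma succ_is_next:
  assumes w: "w \<in> Omega L n" and k: "k \<in> {1..n}" and d: "fwd L (bpos w k) (bpos w (nxt n k)) = 1"
  shows "(bpos w k + 1) mod L = bpos w (nxt n k)"
proof -
  note F = Omega_facts[OF w]
  have bL: "bpos w k < L" using good_lt[OF F(2) k] .
  have nL: "bpos w (nxt n k) < L" using good_lt[OF F(2) nxt_in[OF k]] .
  show ?thesis
  proof (cases "L = 1")
    case True then show ?thesis using bL nL by simp
  next
    case False
    then have L2: "2 \<le> L" using bL by simp
    have sL: "(bpos w k + 1) mod L < L" using bL by simp
    show ?thesis using fwd_inj[OF bL sL nL] fwd_to_succ[OF bL L2] d by simp
  qed
qed

lemma pred_is_prev:
  assumes w: "w \<in> Omega L n" and k: "k \<in> {1..n}" and d: "fwd L (bpos w (prv n k)) (bpos w k) = 1"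
  shows "(bpos w k + L - 1) mod L = bpos w (prv n k)"
proof -
  note F = Omega_facts[OF w]
  have bL: "bpos w k < L" using good_lt[OF F(2) k] .
  have pL: "bpos w (prv n k) < L" using good_lt[OF F(2) prv_in[OF k]] .
  have "(bpos w (prv n k) + 1) mod L = bpos w (nxt n (prv n k))"
    using succ_is_next[OF w prv_in[OF k]] d nxt_prv[OF k] by simp
  then have "bpos w k = (bpos w (prv n k) + 1) mod L" using nxt_prv[OF k] by simp
  then show ?thesis using pred_eq_iff[OF bL pL] by simp
qed

lemma right_moves_cases:
  assumes w: "w \<in> Omega L n" and k: "k \<in> {1..n}"
  shows "gv n w k = 0 \<Longrightarrow> right_moves n p w k = []"
    and "0 < gv n w k \<Longrightarrow> \<exists>t. right_moves n p w k = [(p k, t)] \<and> t \<in> Omega L n \<and>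
          gv n t = mv n k (prv n k) (gv n w)"
proof -
  note F = Omega_facts[OF w]
  have bL: "bpos w k < L" using good_lt[OF F(2) k] .
  have nL: "bpos w (nxt n k) < L" using good_lt[OF F(2) nxt_in[OF k]] .
  have pos: "1 \<le> fwd L (bpos w k) (bpos w (nxt n k))" using fwd_pos[OF bL nL] .
  have g: "gv n w k = fwd L (bpos w k) (bpos w (nxt n k)) - 1" using gv_at[OF w k] .
  {
    assume "gv n w k = 0"
    then have "fwd L (bpos w k) (bpos w (nxt n k)) = 1" using g pos by simp
    then have "(bpos w k + 1) mod L = bpos w (nxt n k)" using succ_is_next[OF w k] by simp
    then have "w ! ((bpos w k + 1) mod L) = letter.Ball (nxt n k)" using F(3)[OF nL] nxt_in[OF k] by simp
    then show "right_moves n p w k = []" unfolding right_moves_def Let_def F(1) by simp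
  }
  {
    assume "0 < gv n w k"
    then have d: "2 \<le> fwd L (bpos w k) (bpos w (nxt n k))" using g by simp
    have sL: "(bpos w k + 1) mod L < L" using bL by simp
    have "\<And>m. m \<in> {1..n} \<Longrightarrow> (bpos w k + 1) mod L \<noteq> bpos w m"
    proof
      fix m assume m: "m \<in> {1..n}" and e: "(bpos w k + 1) mod L = bpos w m"
      have L2: "2 \<le> L" using d fwd_le[OF bL nL] by simp
      have "fwd L (bpos w k) (bpos w m) = 1" using fwd_to_succ[OF bL L2] e by simp
      then show False using good_CO[OF F(2) k m] d by simp
    qed
    then obtain i where i: "i \<in> {1..n}" "w ! ((bpos w k + 1) mod L) = Box i"
      using Omega_box[OF w sL] by blast
    show "\<exists>t. right_moves n p w k = [(p k, t)] \<and> t \<in> Omega L n \<and>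
          gv n t = mv n k (prv n k) (gv n w)"
    proof (cases "i = k")
      case True
      have rm: "right_moves n p w k = [(p k, t2 n w k)]"
        unfolding right_moves_def Let_def F(1) using i True by simp
      note T = t2_target[OF w k d]
      show ?thesis using rm T(1) gv_mvR[OF w T(1) k d T(2)] by blast
    next
      case False
      have rm: "right_moves n p w k = [(p k, swap_pos w (bpos w k) ((bpos w k + 1) mod L))]"
        unfolding right_moves_def Let_def F(1) using i False by simp
      note T = swap_target[OF w k d i(2,1)]
      show ?thesis using rm T(1) gv_mvR[OF w T(1) k d T(2)] by blast
    qed
  }
qed

lemma left_moves_cases:
  assumes w: "w \<in> Omega L n" and k: "k \<in> {1..n}"
  shows "gv n w (prv n k) = 0 \<Longrightarrow> left_moves n q w k = []"
    and "0 < gv n w (prv n k) \<Longrightarrow> \<exists>t. left_moves n q w k = [(q k, t)] \<and> t \<in> Omega L n \<and>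
          gv n t = mv n (prv n k) k (gv n w)"
proof -
  note F = Omega_facts[OF w]
  have pk: "prv n k \<in> {1..n}" using prv_in[OF k] .
  have bL: "bpos w k < L" using good_lt[OF F(2) k] .
  have pL: "bpos w (prv n k) < L" using good_lt[OF F(2) pk] .
  have pos: "1 \<le> fwd L (bpos w (prv n k)) (bpos w k)" using fwd_pos[OF pL bL] .
  have g: "gv n w (prv n k) = fwd L (bpos w (prv n k)) (bpos w k) - 1"
    using gv_at[OF w pk] nxt_prv[OF k] by simp
  {
    assume "gv n w (prv n k) = 0"
    then have "fwd L (bpos w (prv n k)) (bpos w k) = 1" using g pos by simp
    then have "(bpos w k + L - 1) mod L = bpos w (prv n k)" using pred_is_prev[OF w k] by simp
    then have "w ! ((bpos w k + L - 1) mod L) = letter.Ball (prv n k)" using F(3)[OF pL] pk by simp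
    then show "left_moves n q w k = []" unfolding left_moves_def Let_def F(1) by simp
  }
  {
    assume "0 < gv n w (prv n k)"
    then have d: "2 \<le> fwd L (bpos w (prv n k)) (bpos w k)" using g by simp
    have sL: "(bpos w k + L - 1) mod L < L" using bL by simp
    have "\<And>m. m \<in> {1..n} \<Longrightarrow> (bpos w k + L - 1) mod L \<noteq> bpos w m"
      using pred_nb[OF F(2) k d] by metis
    then obtain i where i: "i \<in> {1..n}" "w ! ((bpos w k + L - 1) mod L) = Box i"
      using Omega_box[OF w sL] by blast
    show "\<exists>t. left_moves n q w k = [(q k, t)] \<and> t \<in> Omega L n \<and>
          gv n t = mv n (prv n k) k (gv n w)"
    proof (cases "i = k")
      case True
      have rm: "left_moves n q w k = [(q k, t4 n w k)]"
        unfolding left_moves_def Let_def F(1) using i True by simp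
      note T = t4_target[OF w k d]
      show ?thesis using rm T(1) gv_mvL[OF w T(1) k d T(2)] by blast
    next
      case False
      have rm: "left_moves n q w k = [(q k, swap_pos w (bpos w k) ((bpos w k + L - 1) mod L))]"
        unfolding left_moves_def Let_def F(1) using i False by simp
      note T = swapL_target[OF w k d i(2,1)]
      show ?thesis using rm T(1) gv_mvL[OF w T(1) k d T(2)] by blast
    qed
  }
qed


lemma fwd_add:
  assumes "a < L" "b < L" "x < L" "fwd L a b < fwd L a x"
  shows "fwd L b x = fwd L a x - fwd L a b"
  using assms by (auto simp: fwd_eq split: if_splits)

lemma fwd_add2:
  assumes "a < L" "b < L" "x < L" "fwd L a x < fwd L b x"
  shows "fwd L b a = fwd L b x - fwd L a x"
  using assms by (auto simp: fwd_eq split: if_splits)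

lemma fwd_inj1:
  assumes "a < L" "b < L" "x < L" "fwd L a x = fwd L b x"
  shows "a = b"
  using assms by (auto simp: fwd_eq split: if_splits)

lemma fwd_shift: assumes "b < L" "1 \<le> t" "t < L" shows "fwd L b ((b + t) mod L) = t"
proof (cases "b + t < L")
  case True then show ?thesis using assms by (simp add: fwd_eq)
next
  case False
  then have e: "(b + t) mod L = b + t - L" using assms by (simp add: le_mod_geq)
  have "b + t - L < L" using assms by simp
  then show ?thesis unfolding e using assms False by (simp add: fwd_eq)
qed

lemma card_gap:
  assumes b: "b < L" and d: "1 \<le> d" "d \<le> L"
  shows "card {x. x < L \<and> fwd L b x < d} = d - 1"
proof -
  have "bij_betw (\<lambda>t. (b + t) mod L) {1..<d} {x. x < L \<and> fwd L b x < d}"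
  proof (rule bij_betw_byWitness[where f' = "\<lambda>x. fwd L b x"])
    show "\<forall>t\<in>{1..<d}. fwd L b ((b + t) mod L) = t" using fwd_shift[OF b] d by auto
    show "\<forall>x\<in>{x. x < L \<and> fwd L b x < d}. (b + fwd L b x) mod L = x"
    proof
      fix x assume x: "x \<in> {x. x < L \<and> fwd L b x < d}"
      then have xl: "x < L" "fwd L b x < d" by auto
      then have "fwd L b x < L" using d by simp
      then have xb: "x \<noteq> b" using fwd_self[OF b] by auto
      have "fwd L b ((b + fwd L b x) mod L) = fwd L b x"
        using fwd_shift[OF b fwd_pos[OF b xl(1)]] \<open>fwd L b x < L\<close> by simp
      moreover have "(b + fwd L b x) mod L < L" using b by simp
      ultimately show "(b + fwd L b x) mod L = x" using fwd_inj[OF b _ xl(1)] by blast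
    qed
    show "(\<lambda>t. (b + t) mod L) ` {1..<d} \<subseteq> {x. x < L \<and> fwd L b x < d}"
      using fwd_shift[OF b] d b by auto
    show "fwd L b ` {x. x < L \<and> fwd L b x < d} \<subseteq> {1..<d}"
      using fwd_pos[OF b] by auto
  qed
  then show ?thesis using bij_betw_same_card by fastforce
qed

definition blk :: "nat \<Rightarrow> nat \<Rightarrow> (nat \<Rightarrow> nat) \<Rightarrow> nat \<Rightarrow> nat set" where
  "blk L n c a = insert (c a) {x. x < L \<and> fwd L (c a) x < fwd L (c a) (c (nxt n a))}"

lemma blk_card:
  assumes g: "good L n c" and a: "a \<in> {1..n}"
  shows "card (blk L n c a) = fwd L (c a) (c (nxt n a))"
proof -
  have aL: "c a < L" using good_lt[OF g a] .
  have nL: "c (nxt n a) < L" using good_lt[OF g nxt_in[OF a]] .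
  have "c a \<notin> {x. x < L \<and> fwd L (c a) x < fwd L (c a) (c (nxt n a))}"
    using fwd_self[OF aL] fwd_le[OF aL nL] by auto
  moreover have "finite {x. x < L \<and> fwd L (c a) x < fwd L (c a) (c (nxt n a))}" by simp
  ultimately have "card (blk L n c a) = Suc (card {x. x < L \<and> fwd L (c a) x < fwd L (c a) (c (nxt n a))})"
    unfolding blk_def by simp
  then show ?thesis using card_gap[OF aL fwd_pos[OF aL nL] fwd_le[OF aL nL]] fwd_pos[OF aL nL] by simp
qed

lemma blk_cover:
  assumes g: "good L n c" and n: "1 \<le> n" and x: "x < L"
  shows "\<exists>a\<in>{1..n}. x \<in> blk L n c a"
proof -
  obtain a where a: "a \<in> {1..n}" and amin: "\<forall>y. y \<in> {1..n} \<longrightarrow> fwd L (c a) x \<le> fwd L (c y) x"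
    using ex_has_least_nat[of "\<lambda>a. a \<in> {1..n}" 1 "\<lambda>a. fwd L (c a) x"] n by auto
  show ?thesis
  proof (cases "\<exists>b\<in>{1..n}. x = c b")
    case True then show ?thesis unfolding blk_def by auto
  next
    case nb: False
    then have False: "x \<noteq> c a" using a by auto
    have aL: "c a < L" using good_lt[OF g a] .
    have na: "nxt n a \<in> {1..n}" using nxt_in[OF a] .
    have nL: "c (nxt n a) < L" using good_lt[OF g na] .
    have "fwd L (c a) x < fwd L (c a) (c (nxt n a))"
    proof (rule ccontr)
      assume "\<not> ?thesis"
      then have le: "fwd L (c a) (c (nxt n a)) \<le> fwd L (c a) x" by simp
      show False
      proof -
        have "x \<noteq> c (nxt n a)" using nb na by auto
        then have "fwd L (c a) (c (nxt n a)) \<noteq> fwd L (c a) x" using fwd_inj[OF aL nL x] by auto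
        then have lt: "fwd L (c a) (c (nxt n a)) < fwd L (c a) x" using le by simp
        have "fwd L (c (nxt n a)) x = fwd L (c a) x - fwd L (c a) (c (nxt n a))"
          using fwd_add[OF aL nL x lt] .
        moreover have "1 \<le> fwd L (c a) (c (nxt n a))" using fwd_pos[OF aL nL] .
        ultimately have "fwd L (c (nxt n a)) x < fwd L (c a) x" using lt by simp
        then show False using amin na by force
      qed
    qed
    then show ?thesis using a x unfolding blk_def by auto
  qed
qed

lemma blk_disj:
  assumes g: "good L n c" and a: "a \<in> {1..n}" and b: "b \<in> {1..n}" and ab: "a \<noteq> b"
  shows "blk L n c a \<inter> blk L n c b = {}"
proof (rule ccontr)
  assume "\<not> ?thesis"
  then obtain x where xa: "x \<in> blk L n c a" and xb: "x \<in> blk L n c b" by blast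
  have aL: "c a < L" using good_lt[OF g a] .
  have bL: "c b < L" using good_lt[OF g b] .
  have cab: "c a \<noteq> c b" using good_inj[OF g a b] ab by simp
  have COa: "fwd L (c a) (c (nxt n a)) \<le> fwd L (c a) (c b)" using good_CO[OF g a b] .
  have COb: "fwd L (c b) (c (nxt n b)) \<le> fwd L (c b) (c a)" using good_CO[OF g b a] .
  show False
  proof (cases "x = c a")
    case True
    then show False using xb cab COb unfolding blk_def by auto
  next
    case xa': False
    then have ga: "x < L" "fwd L (c a) x < fwd L (c a) (c (nxt n a))" using xa unfolding blk_def by auto
    show False
    proof (cases "x = c b")
      case True
      then show False using ga COa by simp
    next
      case False
      then have gb: "fwd L (c b) x < fwd L (c b) (c (nxt n b))" using xb unfolding blk_def by auto
      consider "fwd L (c a) x < fwd L (c b) x" | "fwd L (c b) x < fwd L (c a) x" | "fwd L (c a) x = fwd L (c b) x"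
        by linarith
      then show False
      proof cases
        case 1
        have "fwd L (c b) (c a) = fwd L (c b) x - fwd L (c a) x" using fwd_add2[OF aL bL ga(1) 1] .
        then have "fwd L (c b) (c a) < fwd L (c b) (c (nxt n b))" using gb by simp
        then show False using COb by simp
      next
        case 2
        have "fwd L (c a) (c b) = fwd L (c a) x - fwd L (c b) x" using fwd_add2[OF bL aL ga(1) 2] .
        then have "fwd L (c a) (c b) < fwd L (c a) (c (nxt n a))" using ga by simp
        then show False using COa by simp
      next
        case 3
        then show False using fwd_inj1[OF aL bL ga(1)] cab by simp
      qed
    qed
  qed
qed

lemma blk_sub: "good L n c \<Longrightarrow> a \<in> {1..n} \<Longrightarrow> blk L n c a \<subseteq> {..<L}"
  unfolding blk_def using good_lt by auto

lemma gap_sum: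
  assumes g: "good L n c" and n: "1 \<le> n"
  shows "(\<Sum>a\<in>{1..n}. fwd L (c a) (c (nxt n a))) = L"
proof -
  have U: "(\<Union>a\<in>{1..n}. blk L n c a) = {..<L}"
    using blk_cover[OF g n] blk_sub[OF g] by blast
  have "card (\<Union>a\<in>{1..n}. blk L n c a) = (\<Sum>a\<in>{1..n}. card (blk L n c a))"
  proof (rule card_UN_disjoint)
    show "finite {1..n}" by simp
    show "\<forall>i\<in>{1..n}. finite (blk L n c i)" unfolding blk_def by simp
    show "\<forall>i\<in>{1..n}. \<forall>j\<in>{1..n}. i \<noteq> j \<longrightarrow> blk L n c i \<inter> blk L n c j = {}"
      using blk_disj[OF g] by blast
  qed
  then show ?thesis using U blk_card[OF g] by simp
qed


definition Gs :: "nat \<Rightarrow> nat \<Rightarrow> (nat \<Rightarrow> nat) set" where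
  "Gs n m = {g \<in> PiE {1..n} (\<lambda>_. {0..m}). sum g {1..n} = m}"

lemma finite_Gs: "finite (Gs n m)"
  unfolding Gs_def by (rule finite_subset[of _ "PiE {1..n} (\<lambda>_. {0..m})"]) (auto intro: finite_PiE)

lemma Gs_iff: "g \<in> Gs n m \<longleftrightarrow> g \<in> extensional {1..n} \<and> sum g {1..n} = m"
proof
  assume "g \<in> Gs n m" then show "g \<in> extensional {1..n} \<and> sum g {1..n} = m"
    unfolding Gs_def PiE_def by auto
next
  assume a: "g \<in> extensional {1..n} \<and> sum g {1..n} = m"
  have "g j \<le> m" if "j \<in> {1..n}" for j
    using member_le_sum[of j "{1..n}" g] that a by simp
  then show "g \<in> Gs n m" unfolding Gs_def PiE_def Pi_def using a by auto
qed

lemma gv_ext: "gv n w \<in> extensional {1..n}" unfolding gv_def by simp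
lemma mv_ext: "mv n a b g \<in> extensional {1..n}" unfolding mv_def by simp

lemma gv_in_Gs:
  assumes w: "w \<in> Omega L n" and n: "1 \<le> n"
  shows "gv n w \<in> Gs n (L - n)"
proof -
  note F = Omega_facts[OF w]
  define d where "d a = fwd L (bpos w a) (bpos w (nxt n a))" for a
  have pos: "1 \<le> d a" if "a \<in> {1..n}" for a
    using fwd_pos[OF good_lt[OF F(2) that] good_lt[OF F(2) nxt_in[OF that]]] unfolding d_def .
  have S: "sum d {1..n} = L" using gap_sum[OF F(2) n] d_def by simp
  have "sum (gv n w) {1..n} = sum (\<lambda>a. d a - 1) {1..n}"
    by (intro sum.cong) (simp_all add: gv_at[OF w] d_def)
  moreover have "sum (\<lambda>a. d a - 1) {1..n} + n = L"
  proof -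
    have "sum (\<lambda>a. (d a - 1) + 1) {1..n} = sum (\<lambda>a. d a - 1) {1..n} + sum (\<lambda>a. 1) {1..n}"
      by (rule sum.distrib)
    then have "sum (\<lambda>a. d a - 1) {1..n} + n = sum (\<lambda>a. (d a - 1) + 1) {1..n}" by simp
    also have "\<dots> = sum d {1..n}"
    proof (rule sum.cong)
      fix a assume "a \<in> {1..n}"
      then have "1 \<le> d a" by (rule pos)
      then show "d a - 1 + 1 = d a" by simp
    qed simp
    finally show ?thesis using S by simp
  qed
  ultimately show ?thesis unfolding Gs_iff using gv_ext by simp
qed

lemma finite_Omega: "finite (Omega L n)"
proof (rule finite_subset)
  show "Omega L n \<subseteq> {xs. set xs \<subseteq> (letter.Ball ` {1..n} \<union> Box ` {1..n}) \<and> length xs = L}"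
  proof
    fix w assume w: "w \<in> Omega L n"
    have "set w \<subseteq> (letter.Ball ` {1..n} \<union> Box ` {1..n})"
    proof
      fix y assume "y \<in> set w"
      then obtain x where x: "x < length w" "y = w ! x" by (auto simp: in_set_conv_nth)
      then have "valid n y" using Omega_facts(4)[OF w] Omega_facts(1)[OF w] by simp
      then show "y \<in> (letter.Ball ` {1..n} \<union> Box ` {1..n})" unfolding valid_def by auto
    qed
    then show "w \<in> {xs. set xs \<subseteq> (letter.Ball ` {1..n} \<union> Box ` {1..n}) \<and> length xs = L}"
      using Omega_facts(1)[OF w] by simp
  qed
  show "finite {xs. set xs \<subseteq> (letter.Ball ` {1..n} \<union> Box ` {1..n}) \<and> length xs = L}"
    by (rule finite_lists_length_eq) simp
qed

definition Rz :: "nat \<Rightarrow> (nat \<Rightarrow> real) \<Rightarrow> (nat \<Rightarrow> real) \<Rightarrow> (nat \<Rightarrow> nat) \<Rightarrow> (nat \<Rightarrow> nat) \<Rightarrow> real" where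
  "Rz n p q g h = (\<Sum>k\<in>{1..n}. (if 0 < g k \<and> mv n k (prv n k) g = h then p k else 0)
      + (if 0 < g (prv n k) \<and> mv n (prv n k) k g = h then q k else 0))"

definition Oz :: "nat \<Rightarrow> (nat \<Rightarrow> real) \<Rightarrow> (nat \<Rightarrow> real) \<Rightarrow> (nat \<Rightarrow> nat) \<Rightarrow> real" where
  "Oz n p q g = (\<Sum>k\<in>{1..n}. (if 0 < g k then p k else 0) + (if 0 < g (prv n k) then q k else 0))"

definition Fib :: "nat \<Rightarrow> nat \<Rightarrow> (nat \<Rightarrow> nat) \<Rightarrow> letter list set" where
  "Fib L n h = {w \<in> Omega L n. gv n w = h}"

lemma finite_Fib: "finite (Fib L n h)"
  unfolding Fib_def using finite_Omega by simp

lemma sum_list_concat_filter: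
  "sum_list (map fst (filter P (concat (map f xs)))) = (\<Sum>x\<leftarrow>xs. sum_list (map fst (filter P (f x))))"
  by (induction xs) auto

lemma sum_filter_set:
  fixes xs :: "(real \<times> 'b) list"
  assumes "finite F"
  shows "(\<Sum>y\<in>F. sum_list (map fst (filter (\<lambda>m. snd m = y) xs))) = sum_list (map fst (filter (\<lambda>m. snd m \<in> F) xs))"
proof (induction xs)
  case Nil then show ?case by simp
next
  case (Cons x xs)
  have "(\<Sum>y\<in>F. sum_list (map fst (filter (\<lambda>m. snd m = y) (x # xs))))
      = (\<Sum>y\<in>F. (if snd x = y then fst x else 0) + sum_list (map fst (filter (\<lambda>m. snd m = y) xs)))"
    by (intro sum.cong) auto
  also have "\<dots> = (\<Sum>y\<in>F. (if snd x = y then fst x else 0)) + (\<Sum>y\<in>F. sum_list (map fst (filter (\<lambda>m. snd m = y) xs)))"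
    by (simp add: sum.distrib)
  also have "(\<Sum>y\<in>F. (if snd x = y then fst x else 0)) = (if snd x \<in> F then fst x else 0)"
    using assms by (simp add: sum.delta)
  finally show ?case using Cons by simp
qed

lemma sum_list_upt_set: "(\<Sum>x\<leftarrow>[1..<n+1]. f x) = (\<Sum>x\<in>{1..n}. (f x :: real))"
proof -
  have "(\<Sum>x\<leftarrow>[1..<n+1]. f x) = sum f (set [1..<n+1])"
    by (rule sum_list_distinct_conv_sum_set) simp
  also have "set [1..<n+1] = {1..n}" by auto
  finally show ?thesis .
qed

lemma moves_sum:
  "sum_list (map fst (filter P (moves n p q w))) =
   (\<Sum>k\<in>{1..n}. sum_list (map fst (filter P (right_moves n p w k))) + sum_list (map fst (filter P (left_moves n q w k))))"
  unfolding moves_def sum_list_concat_filter by (simp only: sum_list_upt_set filter_append map_append sum_list_append)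

lemma rm_sum:
  assumes w: "w \<in> Omega L n" and k: "k \<in> {1..n}"
  shows "sum_list (map fst (filter (\<lambda>m. snd m \<in> Fib L n h) (right_moves n p w k)))
       = (if 0 < gv n w k \<and> mv n k (prv n k) (gv n w) = h then p k else 0)"
    and "sum_list (map fst (filter (\<lambda>m. True) (right_moves n p w k))) = (if 0 < gv n w k then p k else 0)"
proof -
  have "sum_list (map fst (filter (\<lambda>m. snd m \<in> Fib L n h) (right_moves n p w k)))
       = (if 0 < gv n w k \<and> mv n k (prv n k) (gv n w) = h then p k else 0) \<and>
       sum_list (map fst (filter (\<lambda>m. True) (right_moves n p w k))) = (if 0 < gv n w k then p k else 0)"
  proof (cases "gv n w k = 0")
    case True then show ?thesis using right_moves_cases(1)[OF w k] by simp
  next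
    case False
    then obtain t where t: "right_moves n p w k = [(p k, t)]" "t \<in> Omega L n"
        "gv n t = mv n k (prv n k) (gv n w)"
      using right_moves_cases(2)[OF w k] by auto
    show ?thesis using t False unfolding Fib_def by auto
  qed
  then show "sum_list (map fst (filter (\<lambda>m. snd m \<in> Fib L n h) (right_moves n p w k)))
       = (if 0 < gv n w k \<and> mv n k (prv n k) (gv n w) = h then p k else 0)"
    and "sum_list (map fst (filter (\<lambda>m. True) (right_moves n p w k))) = (if 0 < gv n w k then p k else 0)"
    by auto
qed

lemma lm_sum:
  assumes w: "w \<in> Omega L n" and k: "k \<in> {1..n}"
  shows "sum_list (map fst (filter (\<lambda>m. snd m \<in> Fib L n h) (left_moves n q w k)))
       = (if 0 < gv n w (prv n k) \<and> mv n (prv n k) k (gv n w) = h then q k else 0)"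
    and "sum_list (map fst (filter (\<lambda>m. True) (left_moves n q w k))) = (if 0 < gv n w (prv n k) then q k else 0)"
proof -
  have "sum_list (map fst (filter (\<lambda>m. snd m \<in> Fib L n h) (left_moves n q w k)))
       = (if 0 < gv n w (prv n k) \<and> mv n (prv n k) k (gv n w) = h then q k else 0) \<and>
       sum_list (map fst (filter (\<lambda>m. True) (left_moves n q w k))) = (if 0 < gv n w (prv n k) then q k else 0)"
  proof (cases "gv n w (prv n k) = 0")
    case True then show ?thesis using left_moves_cases(1)[OF w k] by simp
  next
    case False
    then obtain t where t: "left_moves n q w k = [(q k, t)]" "t \<in> Omega L n"
        "gv n t = mv n (prv n k) k (gv n w)"
      using left_moves_cases(2)[OF w k] by auto
    show ?thesis using t False unfolding Fib_def by auto
  qed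
  then show "sum_list (map fst (filter (\<lambda>m. snd m \<in> Fib L n h) (left_moves n q w k)))
       = (if 0 < gv n w (prv n k) \<and> mv n (prv n k) k (gv n w) = h then q k else 0)"
    and "sum_list (map fst (filter (\<lambda>m. True) (left_moves n q w k))) = (if 0 < gv n w (prv n k) then q k else 0)"
    by auto
qed

lemma rate_fiber:
  assumes w: "w \<in> Omega L n"
  shows "(\<Sum>w'\<in>Fib L n h. rate n p q w w') = Rz n p q (gv n w) h"
proof -
  have "(\<Sum>w'\<in>Fib L n h. rate n p q w w') = sum_list (map fst (filter (\<lambda>m. snd m \<in> Fib L n h) (moves n p q w)))"
    unfolding rate_def by (rule sum_filter_set[OF finite_Fib])
  also have "\<dots> = Rz n p q (gv n w) h"
    unfolding moves_sum Rz_def using rm_sum(1)[OF w] lm_sum(1)[OF w] by (intro sum.cong) auto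
  finally show ?thesis .
qed

lemma out_gv:
  assumes w: "w \<in> Omega L n"
  shows "out_rate n p q w = Oz n p q (gv n w)"
proof -
  have "out_rate n p q w = sum_list (map fst (filter (\<lambda>m. True) (moves n p q w)))"
    unfolding out_rate_def by simp
  also have "\<dots> = Oz n p q (gv n w)"
    unfolding moves_sum Oz_def using rm_sum(2)[OF w] lm_sum(2)[OF w] by (intro sum.cong) auto
  finally show ?thesis .
qed

definition mu :: "nat \<Rightarrow> nat \<Rightarrow> (letter list \<Rightarrow> real) \<Rightarrow> (nat \<Rightarrow> nat) \<Rightarrow> real" where
  "mu L n \<pi> h = (\<Sum>w\<in>Fib L n h. \<pi> w)"

lemma sum_group_gv:
  assumes n: "1 \<le> n"
  shows "(\<Sum>w\<in>Omega L n. \<pi> w * F (gv n w)) = (\<Sum>g\<in>Gs n (L - n). mu L n \<pi> g * F g)"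
proof -
  have "(\<Sum>g\<in>Gs n (L - n). \<Sum>w\<in>{x \<in> Omega L n. gv n x = g}. \<pi> w * F (gv n w)) = (\<Sum>w\<in>Omega L n. \<pi> w * F (gv n w))"
    by (rule sum.group[OF finite_Omega finite_Gs]) (use gv_in_Gs n in auto)
  moreover have "(\<Sum>w\<in>{x \<in> Omega L n. gv n x = g}. \<pi> w * F (gv n w)) = mu L n \<pi> g * F g" for g
    unfolding mu_def Fib_def by (simp add: sum_distrib_right)
  ultimately show ?thesis by simp
qed

lemma lumped:
  assumes st: "stationary L n p q \<pi>" and n: "1 \<le> n"
  shows "(\<Sum>g\<in>Gs n (L - n). mu L n \<pi> g * Rz n p q g h) = mu L n \<pi> h * Oz n p q h"
    and "\<And>g. mu L n \<pi> g \<ge> 0"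
    and "(\<Sum>g\<in>Gs n (L - n). mu L n \<pi> g) = 1"
proof -
  note S = st[unfolded stationary_def]
  have "(\<Sum>w\<in>Fib L n h. \<Sum>w'\<in>Omega L n. \<pi> w' * rate n p q w' w) = (\<Sum>w\<in>Fib L n h. \<pi> w * out_rate n p q w)"
    using S unfolding Fib_def by (intro sum.cong) auto
  also have "\<dots> = (\<Sum>w\<in>Fib L n h. \<pi> w * Oz n p q h)"
    unfolding Fib_def using out_gv by (intro sum.cong) auto
  also have "\<dots> = mu L n \<pi> h * Oz n p q h" unfolding mu_def by (simp add: sum_distrib_right)
  finally have R: "(\<Sum>w\<in>Fib L n h. \<Sum>w'\<in>Omega L n. \<pi> w' * rate n p q w' w) = mu L n \<pi> h * Oz n p q h" .
  have "(\<Sum>w\<in>Fib L n h. \<Sum>w'\<in>Omega L n. \<pi> w' * rate n p q w' w) = (\<Sum>w'\<in>Omega L n. \<pi> w' * (\<Sum>w\<in>Fib L n h. rate n p q w' w))"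
    by (subst sum.swap) (simp add: sum_distrib_left)
  also have "\<dots> = (\<Sum>w'\<in>Omega L n. \<pi> w' * Rz n p q (gv n w') h)"
    using rate_fiber by (intro sum.cong) auto
  also have "\<dots> = (\<Sum>g\<in>Gs n (L - n). mu L n \<pi> g * Rz n p q g h)"
    by (rule sum_group_gv[OF n])
  finally show "(\<Sum>g\<in>Gs n (L - n). mu L n \<pi> g * Rz n p q g h) = mu L n \<pi> h * Oz n p q h" using R by simp
  show "\<And>g. mu L n \<pi> g \<ge> 0" unfolding mu_def Fib_def using S by (intro sum_nonneg) auto
  have "(\<Sum>g\<in>Gs n (L - n). mu L n \<pi> g) = (\<Sum>g\<in>Gs n (L - n). mu L n \<pi> g * 1)" by simp
  also have "\<dots> = (\<Sum>w\<in>Omega L n. \<pi> w * 1)" using sum_group_gv[OF n, where F = "\<lambda>_. 1" and \<pi> = \<pi> and L = L] by simp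
  finally show "(\<Sum>g\<in>Gs n (L - n). mu L n \<pi> g) = 1" using S by simp
qed


lemma mv_apply: "j \<in> {1..n} \<Longrightarrow> mv n a b g j = g j - (if j = a then 1 else 0) + (if j = b then 1 else 0)"
  unfolding mv_def by simp

lemma mv_Gs:
  assumes g: "g \<in> Gs n m" and a: "a \<in> {1..n}" and b: "b \<in> {1..n}" and pos: "0 < g a"
  shows "mv n a b g \<in> Gs n m"
proof -
  have e: "mv n a b g j + (if j = a then 1 else 0) = g j + (if j = b then 1 else 0)" if "j \<in> {1..n}" for j
    using mv_apply[OF that] pos by auto
  have "sum (\<lambda>j. mv n a b g j + (if j = a then 1 else 0)) {1..n} = sum (\<lambda>j. g j + (if j = b then 1 else 0)) {1..n}"
    using e by (intro sum.cong) auto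
  then have "sum (mv n a b g) {1..n} + 1 = sum g {1..n} + 1"
    using a b by (simp add: sum.distrib)
  then show ?thesis using g mv_ext unfolding Gs_iff by simp
qed

lemma mv_inv:
  assumes g: "g \<in> extensional {1..n}" and h: "h \<in> extensional {1..n}"
    and a: "a \<in> {1..n}" and b: "b \<in> {1..n}"
  shows "(0 < g a \<and> mv n a b g = h) \<longleftrightarrow> (0 < h b \<and> g = mv n b a h)"
proof
  assume A: "0 < g a \<and> mv n a b g = h"
  have hb: "0 < h b" using A mv_apply[OF b, where a=a and b=b and g=g] by auto
  have "g = mv n b a h"
  proof (rule extensionalityI[OF g mv_ext])
    fix j assume j: "j \<in> {1..n}"
    show "g j = mv n b a h j" using A mv_apply[OF j, of b a h] mv_apply[OF j, of a b g] by auto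
  qed
  then show "0 < h b \<and> g = mv n b a h" using hb by simp
next
  assume A: "0 < h b \<and> g = mv n b a h"
  have ga: "0 < g a" using A mv_apply[OF a, of b a h] by auto
  have "h = mv n a b g"
  proof (rule extensionalityI[OF h mv_ext])
    fix j assume j: "j \<in> {1..n}"
    show "h j = mv n a b g j" using A mv_apply[OF j, of b a h] mv_apply[OF j, of a b g] by auto
  qed
  then show "0 < g a \<and> mv n a b g = h" using ga by simp
qed

definition nu :: "nat \<Rightarrow> (nat \<Rightarrow> real) \<Rightarrow> (nat \<Rightarrow> nat) \<Rightarrow> real" where
  "nu n x g = (\<Prod>j\<in>{1..n}. x j ^ g j)"

lemma nu_mv:
  assumes a: "a \<in> {1..n}" and b: "b \<in> {1..n}" and pos: "0 < h b"
  shows "nu n x (mv n b a h) * x b = nu n x h * x a"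
proof -
  have e: "x j ^ mv n b a h j * (if j = b then x b else 1) = x j ^ h j * (if j = a then x a else 1)"
    if j: "j \<in> {1..n}" for j
  proof -
    have m: "mv n b a h j = h j - (if j = b then 1 else 0) + (if j = a then 1 else 0)" using mv_apply[OF j] .
    show ?thesis
    proof (cases "j = b")
      case True
      obtain r where r: "h b = Suc r" using pos by (cases "h b") auto
      then show ?thesis using m True by (cases "j = a") (auto simp: mult_ac)
    next
      case False
      then show ?thesis using m by (cases "j = a") (auto simp: power_Suc mult_ac)
    qed
  qed
  have "(\<Prod>j\<in>{1..n}. x j ^ mv n b a h j * (if j = b then x b else 1)) = (\<Prod>j\<in>{1..n}. x j ^ h j * (if j = a then x a else 1))"
    using e by (rule prod.cong[OF refl])
  then show ?thesis unfolding nu_def prod.distrib using a b by (simp add: prod.delta)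
qed

lemma nu_pos: "(\<And>j. j \<in> {1..n} \<Longrightarrow> 0 < x j) \<Longrightarrow> 0 < nu n x g"
  unfolding nu_def by (intro prod_pos) auto

lemma sum_prv: "(\<Sum>k\<in>{1..n}. f (prv n k)) = (\<Sum>k\<in>{1..n}. (f k :: real))"
  by (rule sum.reindex_bij_witness[where i = "nxt n" and j = "prv n"])
     (simp_all only: nxt_prv prv_nxt prv_in nxt_in)

lemma sum_delta_Gs:
  "(\<Sum>g\<in>Gs n m. nu n x g * (if g = g0 then c else 0)) = (if g0 \<in> Gs n m then nu n x g0 * c else 0)"
proof -
  have "(\<Sum>g\<in>Gs n m. nu n x g * (if g = g0 then c else 0)) = (\<Sum>g\<in>Gs n m. (if g = g0 then nu n x g * c else 0))"
    by (intro sum.cong) auto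
  also have "\<dots> = (if g0 \<in> Gs n m then nu n x g0 * c else 0)"
    using finite_Gs by (simp add: sum.delta')
  finally show ?thesis .
qed

lemma nu_stationary:
  assumes xpos: "\<And>j. j \<in> {1..n} \<Longrightarrow> 0 < x j"
    and flux: "\<And>k. k \<in> {1..n} \<Longrightarrow> p k * x k - q k * x (prv n k) = D"
    and h: "h \<in> Gs n m"
  shows "(\<Sum>g\<in>Gs n m. nu n x g * Rz n p q g h) = nu n x h * Oz n p q h"
proof -
  have hext: "h \<in> extensional {1..n}" using h Gs_iff by blast
  have T1: "(\<Sum>g\<in>Gs n m. nu n x g * (if 0 < g k \<and> mv n k (prv n k) g = h then p k else 0))
      = (if 0 < h (prv n k) then nu n x h * (p k * x k / x (prv n k)) else 0)" if k: "k \<in> {1..n}" for k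
  proof -
    have pk: "prv n k \<in> {1..n}" using prv_in[OF k] .
    have "(\<Sum>g\<in>Gs n m. nu n x g * (if 0 < g k \<and> mv n k (prv n k) g = h then p k else 0))
        = (\<Sum>g\<in>Gs n m. nu n x g * (if g = mv n (prv n k) k h then (if 0 < h (prv n k) then p k else 0) else 0))"
    proof (rule sum.cong[OF refl])
      fix g assume "g \<in> Gs n m"
      then have gext: "g \<in> extensional {1..n}" using Gs_iff by blast
      show "nu n x g * (if 0 < g k \<and> mv n k (prv n k) g = h then p k else 0) =
          nu n x g * (if g = mv n (prv n k) k h then (if 0 < h (prv n k) then p k else 0) else 0)"
        using mv_inv[OF gext hext k pk] by auto
    qed
    also have "\<dots> = (if mv n (prv n k) k h \<in> Gs n m then nu n x (mv n (prv n k) k h) * (if 0 < h (prv n k) then p k else 0) else 0)"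
      by (rule sum_delta_Gs)
    also have "\<dots> = (if 0 < h (prv n k) then nu n x h * (p k * x k / x (prv n k)) else 0)"
    proof (cases "0 < h (prv n k)")
      case True
      have "mv n (prv n k) k h \<in> Gs n m" using mv_Gs[OF h pk k True] .
      moreover have "nu n x (mv n (prv n k) k h) = nu n x h * x k / x (prv n k)"
        using nu_mv[where a=k and b="prv n k" and h=h and x=x, OF k pk True] xpos[OF pk] by (simp add: field_simps)
      ultimately show ?thesis using True by simp
    qed simp
    finally show ?thesis .
  qed
  have T2: "(\<Sum>g\<in>Gs n m. nu n x g * (if 0 < g (prv n k) \<and> mv n (prv n k) k g = h then q k else 0))
      = (if 0 < h k then nu n x h * (q k * x (prv n k) / x k) else 0)" if k: "k \<in> {1..n}" for k
  proof -
    have pk: "prv n k \<in> {1..n}" using prv_in[OF k] .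
    have "(\<Sum>g\<in>Gs n m. nu n x g * (if 0 < g (prv n k) \<and> mv n (prv n k) k g = h then q k else 0))
        = (\<Sum>g\<in>Gs n m. nu n x g * (if g = mv n k (prv n k) h then (if 0 < h k then q k else 0) else 0))"
    proof (rule sum.cong[OF refl])
      fix g assume "g \<in> Gs n m"
      then have gext: "g \<in> extensional {1..n}" using Gs_iff by blast
      show "nu n x g * (if 0 < g (prv n k) \<and> mv n (prv n k) k g = h then q k else 0) =
          nu n x g * (if g = mv n k (prv n k) h then (if 0 < h k then q k else 0) else 0)"
        using mv_inv[OF gext hext pk k] by auto
    qed
    also have "\<dots> = (if mv n k (prv n k) h \<in> Gs n m then nu n x (mv n k (prv n k) h) * (if 0 < h k then q k else 0) else 0)"
      by (rule sum_delta_Gs)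
    also have "\<dots> = (if 0 < h k then nu n x h * (q k * x (prv n k) / x k) else 0)"
    proof (cases "0 < h k")
      case True
      have "mv n k (prv n k) h \<in> Gs n m" using mv_Gs[OF h k pk True] .
      moreover have "nu n x (mv n k (prv n k) h) = nu n x h * x (prv n k) / x k"
        using nu_mv[where a="prv n k" and b=k and h=h and x=x, OF pk k True] xpos[OF k] by (simp add: field_simps)
      ultimately show ?thesis using True by simp
    qed simp
    finally show ?thesis .
  qed
  have "(\<Sum>g\<in>Gs n m. nu n x g * Rz n p q g h) =
      (\<Sum>k\<in>{1..n}. (\<Sum>g\<in>Gs n m. nu n x g * (if 0 < g k \<and> mv n k (prv n k) g = h then p k else 0))
        + (\<Sum>g\<in>Gs n m. nu n x g * (if 0 < g (prv n k) \<and> mv n (prv n k) k g = h then q k else 0)))"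
    unfolding Rz_def by (simp add: sum_distrib_left sum.distrib distrib_left sum.swap[of _ "Gs n m"])
  also have "\<dots> = (\<Sum>k\<in>{1..n}. (if 0 < h (prv n k) then nu n x h * (p k * x k / x (prv n k)) else 0)
        + (if 0 < h k then nu n x h * (q k * x (prv n k) / x k) else 0))"
    using T1 T2 by (intro sum.cong) auto
  also have "\<dots> = (\<Sum>k\<in>{1..n}. (if 0 < h (prv n k) then nu n x h * (q k + D / x (prv n k)) else 0)
        + (if 0 < h k then nu n x h * (p k - D / x k) else 0))"
  proof (rule sum.cong[OF refl])
    fix k assume k: "k \<in> {1..n}"
    have xk: "0 < x k" "0 < x (prv n k)" using xpos[OF k] xpos[OF prv_in[OF k]] by auto
    have "p k * x k / x (prv n k) = q k + D / x (prv n k)" using flux[OF k] xk by (simp add: field_simps)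
    moreover have "q k * x (prv n k) / x k = p k - D / x k" using flux[OF k] xk by (simp add: field_simps)
    ultimately show "(if 0 < h (prv n k) then nu n x h * (p k * x k / x (prv n k)) else 0)
        + (if 0 < h k then nu n x h * (q k * x (prv n k) / x k) else 0) =
        (if 0 < h (prv n k) then nu n x h * (q k + D / x (prv n k)) else 0)
        + (if 0 < h k then nu n x h * (p k - D / x k) else 0)" by simp
  qed
  also have "\<dots> = (\<Sum>k\<in>{1..n}. nu n x h * ((if 0 < h k then p k else 0) + (if 0 < h (prv n k) then q k else 0))
      + nu n x h * D * ((if 0 < h (prv n k) then 1 / x (prv n k) else 0) - (if 0 < h k then 1 / x k else 0)))"
    by (intro sum.cong[OF refl]) (simp add: algebra_simps)
  also have "\<dots> = nu n x h * Oz n p q h + nu n x h * D *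
      ((\<Sum>k\<in>{1..n}. (if 0 < h (prv n k) then 1 / x (prv n k) else 0)) - (\<Sum>k\<in>{1..n}. (if 0 < h k then 1 / x k else 0)))"
    unfolding Oz_def sum.distrib by (simp only: sum_subtractf sum.distrib flip: sum_distrib_left)
  also have "(\<Sum>k\<in>{1..n}. (if 0 < h (prv n k) then 1 / x (prv n k) else 0)) = (\<Sum>k\<in>{1..n}. (if 0 < h k then 1 / x k else 0))"
    by (rule sum_prv[where f = "\<lambda>k. if 0 < h k then 1 / x k else 0"])
  finally show ?thesis by simp
qed


definition Ez :: "nat \<Rightarrow> nat \<Rightarrow> (nat \<Rightarrow> real) \<Rightarrow> (nat \<Rightarrow> real) \<Rightarrow> ((nat \<Rightarrow> nat) \<times> (nat \<Rightarrow> nat)) set" where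
  "Ez n m p q = {(g, h). g \<in> Gs n m \<and> h \<in> Gs n m \<and> 0 < Rz n p q g h}"

lemma Rz_nonneg:
  assumes "\<And>k. k \<in> {1..n} \<Longrightarrow> 0 < p k \<and> 0 < q k"
  shows "0 \<le> Rz n p q g h"
  unfolding Rz_def using assms by (intro sum_nonneg) (auto simp: less_imp_le)

lemma Rz_pos_R:
  assumes pq: "\<And>k. k \<in> {1..n} \<Longrightarrow> 0 < p k \<and> 0 < q k" and k: "k \<in> {1..n}" and g: "0 < g k"
  shows "0 < Rz n p q g (mv n k (prv n k) g)"
  unfolding Rz_def
proof (rule sum_pos2[OF _ k])
  fix i assume i: "i \<in> {1..n}"
  show "0 \<le> (if 0 < g i \<and> mv n i (prv n i) g = mv n k (prv n k) g then p i else 0) +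
    (if 0 < g (prv n i) \<and> mv n (prv n i) i g = mv n k (prv n k) g then q i else 0)"
    using pq[OF i] by (auto simp: less_imp_le)
qed (use pq[OF k] g in \<open>auto simp: less_imp_le add_pos_nonneg add_nonneg_pos\<close>)

lemma Rz_pos_L:
  assumes pq: "\<And>k. k \<in> {1..n} \<Longrightarrow> 0 < p k \<and> 0 < q k" and k: "k \<in> {1..n}" and g: "0 < g (prv n k)"
  shows "0 < Rz n p q g (mv n (prv n k) k g)"
  unfolding Rz_def
proof (rule sum_pos2[OF _ k])
  fix i assume i: "i \<in> {1..n}"
  show "0 \<le> (if 0 < g i \<and> mv n i (prv n i) g = mv n (prv n k) k g then p i else 0) +
    (if 0 < g (prv n i) \<and> mv n (prv n i) i g = mv n (prv n k) k g then q i else 0)"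
    using pq[OF i] by (auto simp: less_imp_le)
qed (use pq[OF k] g in \<open>auto simp: less_imp_le add_pos_nonneg add_nonneg_pos\<close>)

lemma mv_self:
  assumes g: "g \<in> extensional {1..n}" and a: "0 < g a"
  shows "mv n a a g = g"
proof (rule extensionalityI[OF mv_ext g])
  fix j assume "j \<in> {1..n}"
  then show "mv n a a g j = g j" using mv_apply[of j n a a g] a by auto
qed

lemma mv_comp:
  assumes g: "g \<in> extensional {1..n}" and a: "0 < g a"
  shows "mv n c b (mv n a c g) = mv n a b g"
proof (rule extensionalityI[OF mv_ext mv_ext])
  fix j assume j: "j \<in> {1..n}"
  show "mv n c b (mv n a c g) j = mv n a b g j"
    using mv_apply[OF j, where a=c and b=b and g="mv n a c g"] mv_apply[OF j, where a=a and b=c and g=g]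
      mv_apply[OF j, where a=a and b=b and g=g] a by auto
qed

lemma Gs_ext: "g \<in> Gs n m \<Longrightarrow> g \<in> extensional {1..n}" using Gs_iff by blast

lemma step_path:
  assumes pq: "\<And>k. k \<in> {1..n} \<Longrightarrow> 0 < p k \<and> 0 < q k"
  shows "\<forall>a g. a \<in> {1..n} \<longrightarrow> b \<in> {1..n} \<longrightarrow> g \<in> Gs n m \<longrightarrow> 0 < g a \<longrightarrow>
     (if a \<le> b then b - a else a - b) = d \<longrightarrow> (g, mv n a b g) \<in> (Ez n m p q)\<^sup>*"
proof (induction d)
  case 0
  show ?case
  proof (intro allI impI)
    fix a g assume a: "a \<in> {1..n}" and b: "b \<in> {1..n}" and g: "g \<in> Gs n m" and ga: "0 < g a"
      and d: "(if a \<le> b then b - a else a - b) = 0"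
    then have "a = b" by (auto split: if_splits)
    then have "mv n a b g = g" using mv_self[OF Gs_ext[OF g] ga] by simp
    then show "(g, mv n a b g) \<in> (Ez n m p q)\<^sup>*" by simp
  qed
next
  case (Suc d)
  show ?case
  proof (intro allI impI)
    fix a g assume a: "a \<in> {1..n}" and b: "b \<in> {1..n}" and g: "g \<in> Gs n m" and ga: "0 < g a"
      and d: "(if a \<le> b then b - a else a - b) = Suc d"
    show "(g, mv n a b g) \<in> (Ez n m p q)\<^sup>*"
    proof (cases "a < b")
      case True
      define a' where "a' = a + 1"
      have a': "a' \<in> {1..n}" using a b True a'_def by auto
      have pa': "prv n a' = a" using a unfolding prv_def a'_def by simp
      define g' where "g' = mv n a a' g"
      have g'G: "g' \<in> Gs n m" using mv_Gs[OF g a a' ga] g'_def by simp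
      have "0 < Rz n p q g g'" using Rz_pos_L[where p=p and q=q and n=n and g=g, OF pq a'] pa' ga g'_def by simp
      then have e1: "(g, g') \<in> Ez n m p q" unfolding Ez_def using g g'G by simp
      have g'a': "0 < g' a'" using mv_apply[OF a', where a=a and b=a' and g=g] g'_def by simp
      have "(if a' \<le> b then b - a' else a' - b) = d" using d True a'_def by auto
      then have "(g', mv n a' b g') \<in> (Ez n m p q)\<^sup>*" using Suc a' b g'G g'a' by blast
      moreover have "mv n a' b g' = mv n a b g" using mv_comp[OF Gs_ext[OF g] ga] g'_def by simp
      ultimately show ?thesis using e1 by (simp add: converse_rtrancl_into_rtrancl)
    next
      case False
      then have ab: "b < a" using d by (auto split: if_splits)
      define a' where "a' = a - 1"
      have a': "a' \<in> {1..n}"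
      proof -
        have "1 \<le> b" "b < a" "a \<le> n" using a b ab by auto
        then show ?thesis unfolding a'_def by auto
      qed
      have pa': "prv n a = a'" unfolding prv_def a'_def using ab b by auto
      define g' where "g' = mv n a a' g"
      have g'G: "g' \<in> Gs n m" using mv_Gs[OF g a a' ga] g'_def by simp
      have "0 < Rz n p q g g'" using Rz_pos_R[where p=p and q=q and n=n and g=g, OF pq a ga] pa' g'_def by simp
      then have e1: "(g, g') \<in> Ez n m p q" unfolding Ez_def using g g'G by simp
      have g'a': "0 < g' a'" using mv_apply[OF a', where a=a and b=a' and g=g] g'_def ab by simp
      have "(if a' \<le> b then b - a' else a' - b) = d" using d ab a'_def by auto
      then have "(g', mv n a' b g') \<in> (Ez n m p q)\<^sup>*" using Suc a' b g'G g'a' by blast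
      moreover have "mv n a' b g' = mv n a b g" using mv_comp[OF Gs_ext[OF g] ga] g'_def by simp
      ultimately show ?thesis using e1 by (simp add: converse_rtrancl_into_rtrancl)
    qed
  qed
qed

definition Dz :: "nat \<Rightarrow> (nat \<Rightarrow> nat) \<Rightarrow> (nat \<Rightarrow> nat) \<Rightarrow> nat" where
  "Dz n g h = (\<Sum>j\<in>{1..n}. (g j - h j) + (h j - g j))"

lemma connected:
  assumes pq: "\<And>k. k \<in> {1..n} \<Longrightarrow> 0 < p k \<and> 0 < q k" and h: "h \<in> Gs n m"
  shows "g \<in> Gs n m \<Longrightarrow> (g, h) \<in> (Ez n m p q)\<^sup>*"
proof (induction "Dz n g h" arbitrary: g rule: less_induct)
  case less
  note g = less.prems
  show ?case
  proof (cases "g = h")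
    case True then show ?thesis by simp
  next
    case False
    then obtain j where j: "j \<in> {1..n}" "g j \<noteq> h j"
      using extensionalityI[OF Gs_ext[OF g] Gs_ext[OF h]] by blast
    have sg: "sum g {1..n} = m" and sh: "sum h {1..n} = m" using g h Gs_iff by auto
    have exa: "\<exists>a\<in>{1..n}. h a < g a"
    proof (rule ccontr)
      assume "\<not> ?thesis"
      then have le: "\<forall>a\<in>{1..n}. g a \<le> h a" by auto
      then have "g j < h j" using j by force
      then have "\<exists>a\<in>{1..n}. g a < h a" using j by blast
      then have "sum g {1..n} < sum h {1..n}" using sum_strict_mono_ex1[OF _ le] by simp
      then show False using sg sh by simp
    qed
    have exb: "\<exists>b\<in>{1..n}. g b < h b"
    proof (rule ccontr)
      assume "\<not> ?thesis"
      then have le: "\<forall>a\<in>{1..n}. h a \<le> g a" by auto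
      then have "h j < g j" using j by force
      then have "\<exists>a\<in>{1..n}. h a < g a" using j by blast
      then have "sum h {1..n} < sum g {1..n}" using sum_strict_mono_ex1[OF _ le] by simp
      then show False using sg sh by simp
    qed
    obtain a where a: "a \<in> {1..n}" "h a < g a" using exa by blast
    obtain b where b: "b \<in> {1..n}" "g b < h b" using exb by blast
    have ab: "a \<noteq> b" using a b by auto
    have ga: "0 < g a" using a by simp
    define g' where "g' = mv n a b g"
    have g'G: "g' \<in> Gs n m" using mv_Gs[OF g a(1) b(1) ga] g'_def by simp
    have p1: "(g, g') \<in> (Ez n m p q)\<^sup>*"
      using step_path[where p=p and q=q and n=n and b=b and m=m and d="if a \<le> b then b - a else a - b", OF pq] a b g ga g'_def by blast
    have e: "(g' i - h i) + (h i - g' i) + (if i = a then 1 else 0) + (if i = b then 1 else 0)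
        = (g i - h i) + (h i - g i)" if i: "i \<in> {1..n}" for i
      using mv_apply[OF i, where a=a and b=b and g=g] a b ab g'_def by auto
    have "Dz n g' h + 2 = Dz n g h"
    proof -
      have "(\<Sum>i\<in>{1..n}. (g' i - h i) + (h i - g' i) + (if i = a then 1 else 0) + (if i = b then 1 else 0))
          = Dz n g h" unfolding Dz_def using e by (intro sum.cong) auto
      then show ?thesis unfolding Dz_def using a b by (simp add: sum.distrib)
    qed
    then have "Dz n g' h < Dz n g h" by simp
    then have "(g', h) \<in> (Ez n m p q)\<^sup>*" using less.hyps g'G by blast
    then show ?thesis using p1 by simp
  qed
qed

lemma Gs_nonempty: "1 \<le> n \<Longrightarrow> (\<lambda>j\<in>{1..n}. if j = 1 then m else 0) \<in> Gs n m"
  unfolding Gs_iff by (simp add: sum.delta)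

lemma unique_stat:
  assumes n: "1 \<le> n" and pq: "\<And>k. k \<in> {1..n} \<Longrightarrow> 0 < p k \<and> 0 < q k"
    and xpos: "\<And>j. j \<in> {1..n} \<Longrightarrow> 0 < x j"
    and flux: "\<And>k. k \<in> {1..n} \<Longrightarrow> p k * x k - q k * x (prv n k) = D"
    and mu: "\<And>h. h \<in> Gs n m \<Longrightarrow> (\<Sum>g\<in>Gs n m. \<mu> g * Rz n p q g h) = \<mu> h * Oz n p q h"
  shows "\<exists>C. \<forall>g\<in>Gs n m. \<mu> g = C * nu n x g"
proof -
  define G where "G = Gs n m"
  have fG: "finite G" using finite_Gs G_def by simp
  have neG: "G \<noteq> {}" using Gs_nonempty[OF n] G_def by blast
  define r where "r g = \<mu> g / nu n x g" for g
  have nup: "0 < nu n x g" for g using nu_pos xpos by blast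
  have mur: "\<mu> g = r g * nu n x g" for g using nup[of g] r_def by simp
  define M where "M = Max (r ` G)"
  have rM: "r g \<le> M" if "g \<in> G" for g using Max_ge fG that M_def by simp
  have "M \<in> r ` G" using Max_in fG neG M_def by auto
  then obtain h0 where h0: "h0 \<in> G" "r h0 = M" by auto
  have key: "r g = M" if h: "h \<in> G" "r h = M" and g: "g \<in> G" "0 < Rz n p q g h" for g h
  proof -
    have "(\<Sum>g\<in>G. (M * nu n x g - \<mu> g) * Rz n p q g h)
        = M * (\<Sum>g\<in>G. nu n x g * Rz n p q g h) - (\<Sum>g\<in>G. \<mu> g * Rz n p q g h)"
      by (simp add: sum_subtractf sum_distrib_left algebra_simps)
    also have "\<dots> = M * (nu n x h * Oz n p q h) - \<mu> h * Oz n p q h"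
      using nu_stationary[where x=x and p=p and q=q and D=D and n=n and m=m and h=h, OF xpos flux] mu[of h] h(1) G_def by simp
    also have "\<dots> = 0" using mur[of h] h(2) by simp
    finally have S: "(\<Sum>g\<in>G. (M * nu n x g - \<mu> g) * Rz n p q g h) = 0" .
    have nn: "0 \<le> (M * nu n x g - \<mu> g) * Rz n p q g h" if "g \<in> G" for g
    proof -
      have "r g * nu n x g \<le> M * nu n x g"
        using rM[OF that] nup[of g] by (intro mult_right_mono) auto
      then have "0 \<le> M * nu n x g - \<mu> g" using mur[of g] by simp
      then show "0 \<le> (M * nu n x g - \<mu> g) * Rz n p q g h" using Rz_nonneg[where p=p and q=q and n=n, OF pq] by simp
    qed
    have "\<forall>g\<in>G. (M * nu n x g - \<mu> g) * Rz n p q g h = 0"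
      using sum_nonneg_eq_0_iff[OF fG nn] S by simp
    then have "(M * nu n x g - \<mu> g) * Rz n p q g h = 0" using g(1) by blast
    then have "M * nu n x g = \<mu> g" using g(2) by simp
    then show "r g = M" using mur[of g] nup[of g] by simp
  qed
  have all: "r g = M" if g: "g \<in> G" for g
  proof -
    have "(g, h0) \<in> (Ez n m p q)\<^sup>*" using connected[where p=p and q=q and n=n, OF pq] h0(1) g G_def by simp
    then show ?thesis
    proof (induction rule: converse_rtrancl_induct)
      case base then show ?case using h0 by simp
    next
      case (step y z)
      then show ?case using key[of z y] unfolding Ez_def G_def by simp
    qed
  qed
  show ?thesis
  proof (intro exI ballI)
    fix g assume "g \<in> Gs n m"
    then have "r g = M" using all G_def by simp
    then show "\<mu> g = M * nu n x g" using mur[of g] by simp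
  qed
qed


definition Ip :: "nat \<Rightarrow> nat \<Rightarrow> (nat \<Rightarrow> real) \<Rightarrow> real" where
  "Ip a b f = (\<Prod>j\<in>{a..<b}. f j)"

lemma Ip_cl: "(\<Prod>j\<in>{a..b}. f j) = Ip a (b + 1) f"
  unfolding Ip_def by (simp add: atLeastLessThanSuc_atLeastAtMost)

lemma Ip_empty: "b \<le> a \<Longrightarrow> Ip a b f = 1" unfolding Ip_def by simp
lemma Ip_top: "a \<le> b \<Longrightarrow> Ip a (b + 1) f = Ip a b f * f b"
  unfolding Ip_def by (simp add: prod.atLeastLessThan_Suc)
lemma Ip_bot: "a < b \<Longrightarrow> Ip a b f = f a * Ip (a + 1) b f"
  unfolding Ip_def by (simp add: prod.atLeast_Suc_lessThan)
lemma Ip_concat: "a \<le> b \<Longrightarrow> b \<le> c \<Longrightarrow> Ip a b f * Ip b c f = Ip a c f"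
  unfolding Ip_def by (simp add: prod.atLeastLessThan_concat)

lemma Ip_one: "Ip (Suc 0) (Suc (Suc 0)) f = f 1" "Ip 1 2 f = f 1"
  unfolding Ip_def by (simp_all add: numeral_2_eq_2)

lemma wbox_Ip: "wbox n p q i k = (if i \<le> k then Ip 1 i p * Ip (i + 1) (k + 1) q * Ip (k + 1) (n + 1) p
     else Ip 1 (k + 1) q * Ip (k + 1) i p * Ip (i + 1) (n + 1) q)"
  unfolding wbox_def Ip_cl
  by (simp add: Ip_def atLeastLessThanSuc_atLeastAtMost)

lemma wbox_flux:
  assumes k: "k \<in> {1..n}" and i: "i \<in> {1..n}"
  shows "p k * wbox n p q i k - q k * wbox n p q i (prv n k)
       = (if i = k then Ip 1 (n + 1) p - Ip 1 (n + 1) q else 0)"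
proof (cases "k = 1")
  case True
  then have pk: "prv n k = n" unfolding prv_def by simp
  show ?thesis
  proof (cases "i = 1")
    case True
    have "p k * wbox n p q i k = Ip 1 (n + 1) p"
      using \<open>k = 1\<close> True k Ip_bot[of 1 "n + 1" p] by (simp add: wbox_Ip Ip_empty)
    moreover have "q k * wbox n p q i (prv n k) = Ip 1 (n + 1) q"
      using \<open>k = 1\<close> True k pk Ip_bot[of 1 "n + 1" q] by (simp add: wbox_Ip Ip_empty)
    ultimately show ?thesis using True \<open>k = 1\<close> by simp
  next
    case False
    then have i2: "2 \<le> i" "i \<le> n" using i by auto
    have "wbox n p q i k = q 1 * Ip 2 i p * Ip (i + 1) (n + 1) q"
      using \<open>k = 1\<close> i2 by (simp add: wbox_Ip Ip_one Ip_empty numeral_2_eq_2)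
    moreover have "wbox n p q i (prv n k) = p 1 * Ip 2 i p * Ip (i + 1) (n + 1) q"
      using pk i2 Ip_bot[of 1 i p] by (simp add: wbox_Ip Ip_empty numeral_2_eq_2)
    ultimately show ?thesis using False \<open>k = 1\<close> by simp
  qed
next
  case False
  then have k2: "2 \<le> k" "k \<le> n" using k by auto
  then have pk: "prv n k = k - 1" unfolding prv_def by simp
  obtain k' where k': "k = k' + 1" using k2 by (cases k) auto
  have pk': "prv n k = k'" using pk k' by simp
  consider "i < k" | "i = k" | "k < i" by linarith
  then show ?thesis
  proof cases
    case 1
    then have ik: "i \<le> k'" using k' by simp
    have A: "wbox n p q i k = Ip 1 i p * (Ip (i + 1) k q * q k) * Ip (k + 1) (n + 1) p"
      using 1 Ip_top[of "i + 1" k q] by (simp add: wbox_Ip)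
    have B: "wbox n p q i (prv n k) = Ip 1 i p * Ip (i + 1) k q * (p k * Ip (k + 1) (n + 1) p)"
      using pk' ik k' Ip_bot[of k "n + 1" p] k2 by (simp add: wbox_Ip)
    show ?thesis using A B 1 by (simp add: algebra_simps)
  next
    case 2
    have A: "p k * wbox n p q i k = Ip 1 (n + 1) p"
    proof -
      have "p k * wbox n p q i k = (Ip 1 k p * p k) * Ip (k + 1) (n + 1) p"
        using 2 by (simp add: wbox_Ip Ip_empty algebra_simps)
      also have "\<dots> = Ip 1 (k + 1) p * Ip (k + 1) (n + 1) p" using Ip_top[of 1 k p] k2 by simp
      also have "\<dots> = Ip 1 (n + 1) p" using Ip_concat[of 1 "k + 1" "n + 1" p] k2 by simp
      finally show ?thesis .
    qed
    have B: "q k * wbox n p q i (prv n k) = Ip 1 (n + 1) q"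
    proof -
      have "q k * wbox n p q i (prv n k) = (Ip 1 k q * q k) * Ip (k + 1) (n + 1) q"
        using 2 pk' k' by (simp add: wbox_Ip Ip_empty algebra_simps)
      also have "\<dots> = Ip 1 (k + 1) q * Ip (k + 1) (n + 1) q" using Ip_top[of 1 k q] k2 by simp
      also have "\<dots> = Ip 1 (n + 1) q" using Ip_concat[of 1 "k + 1" "n + 1" q] k2 by simp
      finally show ?thesis .
    qed
    show ?thesis using A B 2 by simp
  next
    case 3
    have A: "wbox n p q i k = (Ip 1 k q * q k) * Ip (k + 1) i p * Ip (i + 1) (n + 1) q"
      using 3 Ip_top[of 1 k q] k2 by (simp add: wbox_Ip)
    have B: "wbox n p q i (prv n k) = Ip 1 k q * (p k * Ip (k + 1) i p) * Ip (i + 1) (n + 1) q"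
      using 3 pk' k' Ip_bot[of k i p] by (simp add: wbox_Ip)
    show ?thesis using A B 3 by (simp add: algebra_simps)
  qed
qed

definition xw :: "nat \<Rightarrow> (nat \<Rightarrow> real) \<Rightarrow> (nat \<Rightarrow> real) \<Rightarrow> nat \<Rightarrow> real" where
  "xw n p q k = (\<Sum>i\<in>{1..n}. wbox n p q i k)"

lemma xw_flux:
  assumes k: "k \<in> {1..n}"
  shows "p k * xw n p q k - q k * xw n p q (prv n k) = (\<Prod>j\<in>{1..n}. p j) - (\<Prod>j\<in>{1..n}. q j)"
proof -
  have "p k * xw n p q k - q k * xw n p q (prv n k) = (\<Sum>i\<in>{1..n}. p k * wbox n p q i k - q k * wbox n p q i (prv n k))"
    unfolding xw_def by (simp add: sum_distrib_left sum_subtractf)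
  also have "\<dots> = (\<Sum>i\<in>{1..n}. (if i = k then Ip 1 (n + 1) p - Ip 1 (n + 1) q else 0))"
    using wbox_flux[OF k] by (intro sum.cong) auto
  also have "\<dots> = Ip 1 (n + 1) p - Ip 1 (n + 1) q" using k by simp
  finally show ?thesis unfolding Ip_cl by simp
qed

lemma Ip_pos: "(\<And>j. j \<in> {1..n} \<Longrightarrow> 0 < f j) \<Longrightarrow> 1 \<le> a \<Longrightarrow> b \<le> n + 1 \<Longrightarrow> 0 < Ip a b f"
  unfolding Ip_def by (intro prod_pos) auto

lemma wbox_pos:
  assumes pq: "\<And>j. j \<in> {1..n} \<Longrightarrow> 0 < p j \<and> 0 < q j" and i: "i \<in> {1..n}" and k: "k \<in> {1..n}"
  shows "0 < wbox n p q i k"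
proof -
  have pp: "\<And>j. j \<in> {1..n} \<Longrightarrow> 0 < p j" and qq: "\<And>j. j \<in> {1..n} \<Longrightarrow> 0 < q j" using pq by auto
  show ?thesis unfolding wbox_Ip using i k
    by (auto intro!: mult_pos_pos Ip_pos[OF pp] Ip_pos[OF qq])
qed

lemma xw_pos:
  assumes pq: "\<And>j. j \<in> {1..n} \<Longrightarrow> 0 < p j \<and> 0 < q j" and k: "k \<in> {1..n}"
  shows "0 < xw n p q k"
  unfolding xw_def using k by (intro sum_pos) (auto intro: wbox_pos[OF pq])


locale fib =
  fixes L n :: nat and c :: "nat \<Rightarrow> nat"
  assumes g: "good L n c" and n: "1 \<le> n"
begin

definition Bc where "Bc = {w \<in> Omega L n. \<forall>k\<in>{1..n}. bpos w k = c k}"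
definition P where "P = {x. x < L \<and> x \<notin> c ` {1..n}}"
definition idx where "idx x = (THE k. k \<in> {1..n} \<and> c k = x)"
definition mk where "mk lab = map (\<lambda>x. if x \<in> c ` {1..n} then letter.Ball (idx x) else Box (lab x)) [0..<L]"
definition I where "I k = {x. x < L \<and> fwd L (c k) x < fwd L (c k) (c (nxt n k))}"
definition kap where "kap x = (THE k. k \<in> {1..n} \<and> x \<in> I k)"

lemma cL: "k \<in> {1..n} \<Longrightarrow> c k < L" using good_lt[OF g] .

lemma idx_c: "k \<in> {1..n} \<Longrightarrow> idx (c k) = k"
  unfolding idx_def using good_inj[OF g] by (intro the_equality) auto

lemma mk_nth: "x < L \<Longrightarrow> mk lab ! x = (if x \<in> c ` {1..n} then letter.Ball (idx x) else Box (lab x))"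
  unfolding mk_def by simp

lemma mk_len: "length (mk lab) = L" unfolding mk_def by simp

lemma mk_in:
  assumes lab: "lab \<in> PiE P (\<lambda>_. {1..n})"
  shows "mk lab \<in> Bc"
proof -
  have val: "valid n (mk lab ! x)" if x: "x < L" for x
  proof (cases "x \<in> c ` {1..n}")
    case True
    then obtain k where k: "k \<in> {1..n}" "x = c k" by auto
    then show ?thesis using mk_nth[OF x] idx_c[OF k(1)] valid_Ball[OF k(1)] by simp
  next
    case False
    then have "x \<in> P" using x unfolding P_def by simp
    then have "lab x \<in> {1..n}" using lab by auto
    then show ?thesis using mk_nth[OF x] False valid_Box by simp
  qed
  have ball: "mk lab ! x = letter.Ball m \<longleftrightarrow> m \<in> {1..n} \<and> x = c m" if x: "x < L" for x m
  proof (cases "x \<in> c ` {1..n}")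
    case True
    then obtain k where k: "k \<in> {1..n}" "x = c k" by auto
    then show ?thesis using mk_nth[OF x] idx_c[OF k(1)] good_inj[OF g k(1)] by auto
  next
    case False
    then show ?thesis using mk_nth[OF x] by auto
  qed
  note T = target_Omega[OF mk_len val g ball]
  show ?thesis unfolding Bc_def using T by simp
qed

lemma Bc_box:
  assumes w: "w \<in> Bc" and x: "x \<in> P"
  shows "\<exists>i\<in>{1..n}. w ! x = Box i"
proof -
  have wO: "w \<in> Omega L n" and bp: "\<And>k. k \<in> {1..n} \<Longrightarrow> bpos w k = c k" using w unfolding Bc_def by auto
  have "x < L" "x \<notin> c ` {1..n}" using x unfolding P_def by auto
  then have "\<And>m. m \<in> {1..n} \<Longrightarrow> x \<noteq> bpos w m" using bp by auto
  then show ?thesis using Omega_box[OF wO \<open>x < L\<close>] by blast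
qed

lemma Bc_ball:
  assumes w: "w \<in> Bc" and k: "k \<in> {1..n}"
  shows "w ! c k = letter.Ball k"
proof -
  have wO: "w \<in> Omega L n" and bp: "bpos w k = c k" using w k unfolding Bc_def by auto
  show ?thesis using Omega_facts(3)[OF wO cL[OF k]] bp k by simp
qed

lemma mk_bij: "bij_betw mk (PiE P (\<lambda>_. {1..n})) Bc"
proof (rule bij_betw_imageI)
  show "inj_on mk (PiE P (\<lambda>_. {1..n}))"
  proof (rule inj_onI)
    fix a b assume a: "a \<in> PiE P (\<lambda>_. {1..n})" and b: "b \<in> PiE P (\<lambda>_. {1..n})" and e: "mk a = mk b"
    show "a = b"
    proof (rule extensionalityI[of _ P])
      show "a \<in> extensional P" "b \<in> extensional P" using a b by (auto simp: PiE_def)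
      fix x assume x: "x \<in> P"
      then have xl: "x < L" "x \<notin> c ` {1..n}" unfolding P_def by auto
      have "mk a ! x = mk b ! x" using e by simp
      then show "a x = b x" using mk_nth[OF xl(1)] xl(2) by simp
    qed
  qed
  show "mk ` PiE P (\<lambda>_. {1..n}) = Bc"
  proof
    show "mk ` PiE P (\<lambda>_. {1..n}) \<subseteq> Bc" using mk_in by blast
    show "Bc \<subseteq> mk ` PiE P (\<lambda>_. {1..n})"
    proof
      fix w assume w: "w \<in> Bc"
      define lab where "lab = (\<lambda>x\<in>P. box_label (w ! x))"
      have lab_in: "lab \<in> PiE P (\<lambda>_. {1..n})"
      proof -
        have "lab x \<in> {1..n}" if "x \<in> P" for x
          using Bc_box[OF w that] that unfolding lab_def box_label_def by auto
        then show ?thesis unfolding lab_def by auto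
      qed
      have wO: "w \<in> Omega L n" using w unfolding Bc_def by auto
      have "w = mk lab"
      proof (rule nth_equalityI)
        show "length w = length (mk lab)" using Omega_facts(1)[OF wO] mk_len by simp
        fix x assume "x < length w"
        then have x: "x < L" using Omega_facts(1)[OF wO] by simp
        show "w ! x = mk lab ! x"
        proof (cases "x \<in> c ` {1..n}")
          case True
          then obtain k where k: "k \<in> {1..n}" "x = c k" by auto
          then show ?thesis using mk_nth[OF x] idx_c Bc_ball[OF w] by simp
        next
          case False
          then have xP: "x \<in> P" using x unfolding P_def by simp
          then obtain i where "w ! x = Box i" using Bc_box[OF w] by blast
          then show ?thesis using mk_nth[OF x] False xP unfolding lab_def box_label_def by simp
        qed
      qed
      then show "w \<in> mk ` PiE P (\<lambda>_. {1..n})" using lab_in by blast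
    qed
  qed
qed

lemma I_eq_blk: "k \<in> {1..n} \<Longrightarrow> I k \<subseteq> blk L n c k"
  unfolding I_def blk_def by auto

lemma I_disj: "k \<in> {1..n} \<Longrightarrow> l \<in> {1..n} \<Longrightarrow> k \<noteq> l \<Longrightarrow> I k \<inter> I l = {}"
  using blk_disj[OF g] I_eq_blk by blast

lemma I_sub_P: "k \<in> {1..n} \<Longrightarrow> I k \<subseteq> P"
proof
  fix x assume k: "k \<in> {1..n}" and x: "x \<in> I k"
  have xl: "x < L" "fwd L (c k) x < fwd L (c k) (c (nxt n k))" using x unfolding I_def by auto
  have "x \<noteq> c l" if l: "l \<in> {1..n}" for l
    using good_CO[OF g k l] xl(2) by auto
  then have "x \<notin> c ` {1..n}" by blast
  then show "x \<in> P" unfolding P_def using xl(1) by blast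
qed

lemma P_cover: "P = (\<Union>k\<in>{1..n}. I k)"
proof
  show "(\<Union>k\<in>{1..n}. I k) \<subseteq> P" using I_sub_P by blast
  show "P \<subseteq> (\<Union>k\<in>{1..n}. I k)"
  proof
    fix x assume x: "x \<in> P"
    then have xl: "x < L" "x \<notin> c ` {1..n}" unfolding P_def by auto
    obtain a where a: "a \<in> {1..n}" "x \<in> blk L n c a" using blk_cover[OF g n xl(1)] by blast
    then have "x \<in> I a" using xl unfolding blk_def I_def by auto
    then show "x \<in> (\<Union>k\<in>{1..n}. I k)" using a by blast
  qed
qed

lemma kap_I: "k \<in> {1..n} \<Longrightarrow> x \<in> I k \<Longrightarrow> kap x = k"
proof -
  assume k: "k \<in> {1..n}" and x: "x \<in> I k"
  show "kap x = k" unfolding kap_def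
  proof (rule the_equality)
    show "k \<in> {1..n} \<and> x \<in> I k" using k x by simp
    fix l assume "l \<in> {1..n} \<and> x \<in> I l"
    then show "l = k" using I_disj[OF k, of l] x by auto
  qed
qed

lemma gapC_Bc: "w \<in> Bc \<Longrightarrow> k \<in> {1..n} \<Longrightarrow> gapC n w k = I k"
proof -
  assume w: "w \<in> Bc" and k: "k \<in> {1..n}"
  have wO: "w \<in> Omega L n" and bp: "\<And>k. k \<in> {1..n} \<Longrightarrow> bpos w k = c k" using w unfolding Bc_def by auto
  show "gapC n w k = I k" unfolding gapC_def I_def Omega_facts(1)[OF wO] using bp k nxt_in[OF k] by simp
qed

lemma finite_P: "finite P" unfolding P_def by simp
lemma finite_I: "finite (I k)" unfolding I_def by simp

lemma card_I: "k \<in> {1..n} \<Longrightarrow> card (I k) = fwd L (c k) (c (nxt n k)) - 1"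
proof -
  assume k: "k \<in> {1..n}"
  have a: "c k < L" and b: "c (nxt n k) < L" using cL[OF k] cL[OF nxt_in[OF k]] by auto
  show ?thesis unfolding I_def using card_gap[OF a fwd_pos[OF a b] fwd_le[OF a b]] .
qed

lemma fiber_sum:
  "(\<Sum>w\<in>Bc. wt n p q w) = (\<Prod>k\<in>{1..n}. xw n p q k ^ (fwd L (c k) (c (nxt n k)) - 1))"
proof -
  have "(\<Sum>w\<in>Bc. wt n p q w) = (\<Sum>lab\<in>PiE P (\<lambda>_. {1..n}). wt n p q (mk lab))"
    using sum.reindex_bij_betw[OF mk_bij, of "wt n p q"] by simp
  also have "\<dots> = (\<Sum>lab\<in>PiE P (\<lambda>_. {1..n}). \<Prod>j\<in>P. wbox n p q (lab j) (kap j))"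
  proof (rule sum.cong[OF refl])
    fix lab assume lab: "lab \<in> PiE P (\<lambda>_. {1..n})"
    have mB: "mk lab \<in> Bc" using mk_in[OF lab] .
    have "wt n p q (mk lab) = (\<Prod>k\<in>{1..n}. \<Prod>j\<in>I k. wbox n p q (lab j) k)"
      unfolding wt_def
    proof (rule prod.cong[OF refl])
      fix k assume k: "k \<in> {1..n}"
      show "(\<Prod>j\<in>gapC n (mk lab) k. wbox n p q (box_label (mk lab ! j)) k) = (\<Prod>j\<in>I k. wbox n p q (lab j) k)"
        unfolding gapC_Bc[OF mB k]
      proof (rule prod.cong[OF refl])
        fix j assume j: "j \<in> I k"
        then have "j \<in> P" using I_sub_P[OF k] by blast
        then have "j < L" "j \<notin> c ` {1..n}" unfolding P_def by auto
        then show "wbox n p q (box_label (mk lab ! j)) k = wbox n p q (lab j) k"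
          using mk_nth by (simp add: box_label_def)
      qed
    qed
    also have "\<dots> = (\<Prod>k\<in>{1..n}. \<Prod>j\<in>I k. wbox n p q (lab j) (kap j))"
      using kap_I by (intro prod.cong) auto
    also have "\<dots> = (\<Prod>j\<in>P. wbox n p q (lab j) (kap j))"
      unfolding P_cover by (rule prod.UNION_disjoint[symmetric]) (simp, simp add: finite_I, use I_disj in blast)
    finally show "wt n p q (mk lab) = (\<Prod>j\<in>P. wbox n p q (lab j) (kap j))" .
  qed
  also have "\<dots> = (\<Prod>j\<in>P. \<Sum>i\<in>{1..n}. wbox n p q i (kap j))"
    by (rule prod_sum_PiE[symmetric]) (auto simp: finite_P)
  also have "\<dots> = (\<Prod>j\<in>P. xw n p q (kap j))" unfolding xw_def by simp
  also have "\<dots> = (\<Prod>k\<in>{1..n}. \<Prod>j\<in>I k. xw n p q (kap j))"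
    unfolding P_cover by (rule prod.UNION_disjoint) (simp, simp add: finite_I, use I_disj in blast)
  also have "\<dots> = (\<Prod>k\<in>{1..n}. \<Prod>j\<in>I k. xw n p q k)"
    using kap_I by (intro prod.cong) auto
  also have "\<dots> = (\<Prod>k\<in>{1..n}. xw n p q k ^ (fwd L (c k) (c (nxt n k)) - 1))"
    using card_I by (intro prod.cong) auto
  finally show ?thesis .
qed

end


definition Sp :: "(nat \<Rightarrow> nat) \<Rightarrow> nat \<Rightarrow> nat" where
  "Sp g k = (\<Sum>l\<in>{1..<k}. g l + 1)"

lemma Sp_1: "Sp g 1 = 0" unfolding Sp_def by simp

lemma Sp_Suc: "1 \<le> k \<Longrightarrow> Sp g (k + 1) = Sp g k + g k + 1"
  unfolding Sp_def by (simp add: sum.atLeastLessThan_Suc)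

lemma Sp_mono: "1 \<le> k \<Longrightarrow> k < l \<Longrightarrow> Sp g k + (l - k) \<le> Sp g l"
proof (induction l)
  case 0 then show ?case by simp
next
  case (Suc l)
  show ?case
  proof (cases "k < l")
    case True
    then have "Sp g k + (l - k) \<le> Sp g l" using Suc by simp
    moreover have "Sp g (Suc l) = Sp g l + g l + 1" using Sp_Suc[of l g] Suc.prems True by simp
    ultimately show ?thesis using True by simp
  next
    case False
    then have "l = k" using Suc.prems by simp
    then show ?thesis using Sp_Suc[of k g] Suc.prems by simp
  qed
qed

lemma Sp_total:
  assumes g: "g \<in> Gs n m" and n: "1 \<le> n"
  shows "Sp g n + g n + 1 = m + n"
proof -
  have "Sp g n + g n + 1 = Sp g (n + 1)" using Sp_Suc[OF n] by simp
  also have "\<dots> = (\<Sum>l\<in>{1..n}. g l + 1)" unfolding Sp_def by (simp add: atLeastLessThanSuc_atLeastAtMost)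
  also have "\<dots> = sum g {1..n} + sum (\<lambda>_. 1) {1..n}" by (rule sum.distrib)
  also have "\<dots> = m + n" using g unfolding Gs_iff by simp
  finally show ?thesis .
qed

lemma Sp_lt:
  assumes g: "g \<in> Gs n m" and n: "1 \<le> n" and k: "k \<in> {1..n}"
  shows "Sp g k < m + n"
proof (cases "k = n")
  case True then show ?thesis using Sp_total[OF g n] by simp
next
  case False
  then have kn: "k < n" using k by simp
  then have "Sp g k + (n - k) \<le> Sp g n" using Sp_mono[of k n g] k by simp
  moreover have "0 < n - k" using kn by simp
  ultimately have "Sp g k < Sp g n" by linarith
  then show ?thesis using Sp_total[OF g n] by simp
qed

lemma Sp_fwd:
  assumes g: "g \<in> Gs n m" and n: "1 \<le> n" and k: "k \<in> {1..n}"
  shows "fwd (m + n) (Sp g k) (Sp g (nxt n k)) = g k + 1"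
proof (cases "k = n")
  case True
  then have nk: "nxt n k = 1" unfolding nxt_def by simp
  have sl: "Sp g n < m + n" using Sp_lt[OF g n] n by simp
  have "0 < m + n" using n by simp
  then have "fwd (m + n) (Sp g n) 0 = 0 + (m + n) - Sp g n" using fwd_eq[of "Sp g n" "m + n" 0] sl by simp
  then show ?thesis using True nk Sp_1 Sp_total[OF g n] by simp
next
  case False
  then have nk: "nxt n k = k + 1" unfolding nxt_def by simp
  have k1: "k + 1 \<in> {1..n}" using k False by auto
  have lt: "Sp g k < Sp g (k + 1)" using Sp_Suc[of k g] k by simp
  show ?thesis using nk Sp_Suc[of k g] k lt Sp_lt[OF g n k] Sp_lt[OF g n k1] by (simp add: fwd_eq)
qed

lemma Sp_good:
  assumes g: "g \<in> Gs n m" and n: "1 \<le> n"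
  shows "good (m + n) n (Sp g)"
  unfolding good_def
proof (intro conjI ballI)
  fix k assume "k \<in> {1..n}" then show "Sp g k < m + n" using Sp_lt[OF g n] by simp
next
  show "inj_on (Sp g) {1..n}"
  proof (rule inj_onI)
    fix a b assume a: "a \<in> {1..n}" and b: "b \<in> {1..n}" and e: "Sp g a = Sp g b"
    show "a = b"
    proof (rule ccontr)
      assume "a \<noteq> b"
      then consider "a < b" | "b < a" by linarith
      then show False
      proof cases
        case 1 then show False using Sp_mono[of a b g] a e by simp
      next
        case 2 then show False using Sp_mono[of b a g] b e by simp
      qed
    qed
  qed
next
  fix a l assume a: "a \<in> {1..n}" and l: "l \<in> {1..n}"
  have aL: "Sp g a < m + n" and lL: "Sp g l < m + n" using Sp_lt[OF g n] a l by auto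
  have d: "fwd (m + n) (Sp g a) (Sp g (nxt n a)) = g a + 1" using Sp_fwd[OF g n a] .
  show "fwd (m + n) (Sp g a) (Sp g (nxt n a)) \<le> fwd (m + n) (Sp g a) (Sp g l)"
  proof (cases "a = n")
    case True
    have tot: "Sp g a + g a + 1 = m + n" using Sp_total[OF g n] True by simp
    show ?thesis
    proof (cases "l = a")
      case True then show ?thesis using d fwd_self[OF aL] tot by simp
    next
      case False
      then have "l < a" using l True by simp
      then have "Sp g l < Sp g a" using Sp_mono[of l a g] l by simp
      then show ?thesis using d tot aL lL by (simp add: fwd_eq)
    qed
  next
    case False
    then have a1: "a + 1 \<in> {1..n}" using a by auto
    have s1: "Sp g (a + 1) = Sp g a + g a + 1" using Sp_Suc[of a g] a by simp
    have a1L: "Sp g (a + 1) < m + n" using Sp_lt[OF g n a1] .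
    consider "l = a" | "a < l" | "l < a" by linarith
    then show ?thesis
    proof cases
      case 1 then show ?thesis using d fwd_le[OF aL] fwd_self[OF aL] a1L s1 by simp
    next
      case 2
      then have "a + 1 = l \<or> a + 1 < l" by auto
      then have "Sp g (a + 1) \<le> Sp g l" using Sp_mono[of "a + 1" l g] by auto
      then show ?thesis using d s1 aL lL by (simp add: fwd_eq)
    next
      case 3
      then have "Sp g l < Sp g a" using Sp_mono[of l a g] l by simp
      then show ?thesis using d s1 aL lL a1L by (simp add: fwd_eq)
    qed
  qed
qed

lemma fwd_recover: "a < L \<Longrightarrow> b < L \<Longrightarrow> (a + fwd L a b) mod L = b"
  by (auto simp: fwd_eq)

lemma fiber_eq:
  assumes gG: "g \<in> Gs n m" and n: "1 \<le> n"
  shows "{w \<in> Omega (m + n) n. w ! 0 = letter.Ball 1 \<and> gv n w = g} = fib.Bc (m + n) n (Sp g)"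
proof -
  interpret fib "m + n" n "Sp g" using Sp_good[OF gG n] n by unfold_locales
  have gext: "g \<in> extensional {1..n}" using gG Gs_iff by blast
  show ?thesis
  proof
    show "{w \<in> Omega (m + n) n. w ! 0 = letter.Ball 1 \<and> gv n w = g} \<subseteq> Bc"
    proof
      fix w assume "w \<in> {w \<in> Omega (m + n) n. w ! 0 = letter.Ball 1 \<and> gv n w = g}"
      then have w: "w \<in> Omega (m + n) n" and w0: "w ! 0 = letter.Ball 1" and gw: "gv n w = g" by auto
      note F = Omega_facts[OF w]
      have b1: "bpos w 1 = 0" using F(3)[of 0 1] w0 n by simp
      have d: "fwd (m + n) (bpos w a) (bpos w (nxt n a)) = g a + 1" if a: "a \<in> {1..n}" for a
      proof -
        have "gv n w a = fwd (m + n) (bpos w a) (bpos w (nxt n a)) - 1" using gv_at[OF w a] .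
        moreover have "1 \<le> fwd (m + n) (bpos w a) (bpos w (nxt n a))"
          using fwd_pos good_lt[OF F(2) a] good_lt[OF F(2) nxt_in[OF a]] by blast
        ultimately show ?thesis using gw by simp
      qed
      have "k \<in> {1..n} \<longrightarrow> bpos w k = Sp g k" for k
      proof (induction k)
        case 0 then show ?case by simp
      next
        case (Suc k)
        show ?case
        proof
          assume k1: "Suc k \<in> {1..n}"
          show "bpos w (Suc k) = Sp g (Suc k)"
          proof (cases "k = 0")
            case True then show ?thesis using b1 Sp_1 by simp
          next
            case False
            then have k: "k \<in> {1..n}" using k1 by auto
            have nk: "nxt n k = Suc k" using k1 unfolding nxt_def by auto
            have IH: "bpos w k = Sp g k" using Suc k by simp
            have "bpos w (Suc k) = (bpos w k + fwd (m + n) (bpos w k) (bpos w (nxt n k))) mod (m + n)"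
              using fwd_recover[OF good_lt[OF F(2) k] good_lt[OF F(2) nxt_in[OF k]]] nk by simp
            also have "\<dots> = (Sp g k + g k + 1) mod (m + n)" using IH d[OF k] by simp
            also have "\<dots> = Sp g (Suc k)" using Sp_Suc[of k g] k Sp_lt[OF gG n k1] by simp
            finally show ?thesis .
          qed
        qed
      qed
      then show "w \<in> Bc" unfolding Bc_def using w by auto
    qed
    show "Bc \<subseteq> {w \<in> Omega (m + n) n. w ! 0 = letter.Ball 1 \<and> gv n w = g}"
    proof
      fix w assume wB: "w \<in> Bc"
      then have w: "w \<in> Omega (m + n) n" and bp: "\<And>k. k \<in> {1..n} \<Longrightarrow> bpos w k = Sp g k"
        unfolding Bc_def by auto
      have one: "1 \<in> {1..n}" using n by simp
      have w0: "w ! 0 = letter.Ball 1" using Bc_ball[OF wB one] Sp_1 by simp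
      have "gv n w = g"
      proof (rule extensionalityI[OF gv_ext gext])
        fix a assume a: "a \<in> {1..n}"
        show "gv n w a = g a" using gv_at[OF w a] bp[OF a] bp[OF nxt_in[OF a]] Sp_fwd[OF gG n a] by simp
      qed
      then show "w \<in> {w \<in> Omega (m + n) n. w ! 0 = letter.Ball 1 \<and> gv n w = g}" using w w0 by simp
    qed
  qed
qed

lemma Z_formula:
  assumes n: "1 \<le> n" and L: "n \<le> L'"
  shows "Z L' n p q = (\<Sum>g\<in>Gs n (L' - n). nu n (xw n p q) g)"
proof -
  define m where "m = L' - n"
  have Lm: "L' = m + n" using L m_def by simp
  define A where "A = {w \<in> Omega L' n. w ! 0 = letter.Ball 1}"
  have fA: "finite A" unfolding A_def using finite_Omega by simp
  have sub: "gv n ` A \<subseteq> Gs n m" unfolding A_def m_def using gv_in_Gs[OF _ n] by auto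
  have "Z L' n p q = (\<Sum>w\<in>A. wt n p q w)" unfolding Z_def A_def by simp
  also have "\<dots> = (\<Sum>g\<in>Gs n m. \<Sum>w\<in>{x \<in> A. gv n x = g}. wt n p q w)"
    by (rule sum.group[OF fA finite_Gs sub, symmetric])
  also have "\<dots> = (\<Sum>g\<in>Gs n m. nu n (xw n p q) g)"
  proof (rule sum.cong[OF refl])
    fix g assume gG: "g \<in> Gs n m"
    interpret fib "m + n" n "Sp g" using Sp_good[OF gG n] n by unfold_locales
    have "{x \<in> A. gv n x = g} = Bc" using fiber_eq[OF gG n] unfolding A_def Lm by auto
    then have "(\<Sum>w\<in>{x \<in> A. gv n x = g}. wt n p q w) = (\<Prod>k\<in>{1..n}. xw n p q k ^ (fwd (m + n) (Sp g k) (Sp g (nxt n k)) - 1))"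
      using fiber_sum by simp
    also have "\<dots> = nu n (xw n p q) g" unfolding nu_def using Sp_fwd[OF gG n] by (intro prod.cong) auto
    finally show "(\<Sum>w\<in>{x \<in> A. gv n x = g}. wt n p q w) = nu n (xw n p q) g" .
  qed
  finally show ?thesis unfolding m_def .
qed


lemma eta_sum:
  assumes w: "w \<in> Omega L n" and x: "x < L"
  shows "(\<Sum>k=1..n. eta k x w) = (if \<exists>m\<in>{1..n}. x = bpos w m then 0 else 1)"
proof (cases "\<exists>m\<in>{1..n}. x = bpos w m")
  case True
  then obtain m where m: "m \<in> {1..n}" "x = bpos w m" by blast
  then have "w ! x = letter.Ball m" using Omega_facts(3)[OF w x] by simp
  then show ?thesis using True unfolding eta_def by simp
next
  case False
  then obtain i where i: "i \<in> {1..n}" "w ! x = Box i" using Omega_box[OF w x] by blast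
  have "(\<Sum>k=1..n. eta k x w) = (\<Sum>k=1..n. if k = i then 1 else 0)"
    unfolding eta_def using i by (intro sum.cong) auto
  also have "\<dots> = 1" using i by simp
  finally show ?thesis using False by simp
qed

lemma right_nb:
  assumes w: "w \<in> Omega L n" and k: "k \<in> {1..n}"
  shows "(if \<exists>m\<in>{1..n}. (bpos w k + 1) mod L = bpos w m then 0 else 1) = (if 0 < gv n w k then 1 else (0::real))"
proof -
  note F = Omega_facts[OF w]
  have bL: "bpos w k < L" using good_lt[OF F(2) k] .
  have nL: "bpos w (nxt n k) < L" using good_lt[OF F(2) nxt_in[OF k]] .
  have pos: "1 \<le> fwd L (bpos w k) (bpos w (nxt n k))" using fwd_pos[OF bL nL] .
  have g: "gv n w k = fwd L (bpos w k) (bpos w (nxt n k)) - 1" using gv_at[OF w k] .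
  show ?thesis
  proof (cases "gv n w k = 0")
    case True
    then have "fwd L (bpos w k) (bpos w (nxt n k)) = 1" using g pos by simp
    then have "(bpos w k + 1) mod L = bpos w (nxt n k)" using succ_is_next[OF w k] by simp
    then show ?thesis using True nxt_in[OF k] by auto
  next
    case False
    then have d: "2 \<le> fwd L (bpos w k) (bpos w (nxt n k))" using g by simp
    have "\<And>m. m \<in> {1..n} \<Longrightarrow> (bpos w k + 1) mod L \<noteq> bpos w m"
    proof
      fix m assume m: "m \<in> {1..n}" and e: "(bpos w k + 1) mod L = bpos w m"
      have L2: "2 \<le> L" using d fwd_le[OF bL nL] by simp
      have "fwd L (bpos w k) (bpos w m) = 1" using fwd_to_succ[OF bL L2] e by simp
      then show False using good_CO[OF F(2) k m] d by simp
    qed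
    then show ?thesis using False by auto
  qed
qed

lemma left_nb:
  assumes w: "w \<in> Omega L n" and k: "k \<in> {1..n}"
  shows "(if \<exists>m\<in>{1..n}. (bpos w k + L - 1) mod L = bpos w m then 0 else 1) = (if 0 < gv n w (prv n k) then 1 else (0::real))"
proof -
  note F = Omega_facts[OF w]
  have pk: "prv n k \<in> {1..n}" using prv_in[OF k] .
  have bL: "bpos w k < L" using good_lt[OF F(2) k] .
  have pL: "bpos w (prv n k) < L" using good_lt[OF F(2) pk] .
  have pos: "1 \<le> fwd L (bpos w (prv n k)) (bpos w k)" using fwd_pos[OF pL bL] .
  have g: "gv n w (prv n k) = fwd L (bpos w (prv n k)) (bpos w k) - 1"
    using gv_at[OF w pk] nxt_prv[OF k] by simp
  show ?thesis
  proof (cases "gv n w (prv n k) = 0")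
    case True
    then have "fwd L (bpos w (prv n k)) (bpos w k) = 1" using g pos by simp
    then have "(bpos w k + L - 1) mod L = bpos w (prv n k)" using pred_is_prev[OF w k] by simp
    then show ?thesis using True pk by auto
  next
    case False
    then have d: "2 \<le> fwd L (bpos w (prv n k)) (bpos w k)" using g by simp
    have "\<And>m. m \<in> {1..n} \<Longrightarrow> (bpos w k + L - 1) mod L \<noteq> bpos w m"
      using pred_nb[OF F(2) k d] by metis
    then show ?thesis using False by auto
  qed
qed

lemma tau_right:
  assumes w: "w \<in> Omega L n" and i: "i \<in> {1..n}"
  shows "(\<Sum>j<L. tau i j w * (\<Sum>k=1..n. eta k ((j + 1) mod L) w)) = (if 0 < gv n w i then 1 else 0)"
proof -
  note F = Omega_facts[OF w]
  have bL: "bpos w i < L" using good_lt[OF F(2) i] .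
  have "(\<Sum>j<L. tau i j w * (\<Sum>k=1..n. eta k ((j + 1) mod L) w))
      = (\<Sum>j<L. if j = bpos w i then (\<Sum>k=1..n. eta k ((bpos w i + 1) mod L) w) else 0)"
  proof (rule sum.cong[OF refl])
    fix j assume "j \<in> {..<L}"
    then have j: "j < L" by simp
    have "w ! j = letter.Ball i \<longleftrightarrow> j = bpos w i" using F(3)[OF j] i by auto
    then show "tau i j w * (\<Sum>k=1..n. eta k ((j + 1) mod L) w) =
        (if j = bpos w i then (\<Sum>k=1..n. eta k ((bpos w i + 1) mod L) w) else 0)"
      unfolding tau_def by auto
  qed
  also have "\<dots> = (\<Sum>k=1..n. eta k ((bpos w i + 1) mod L) w)" using bL by simp
  also have "\<dots> = (if 0 < gv n w i then 1 else 0)"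
    using eta_sum[OF w, of "(bpos w i + 1) mod L"] right_nb[OF w i] bL by simp
  finally show ?thesis .
qed

lemma tau_left:
  assumes w: "w \<in> Omega L n" and i: "i \<in> {1..n}"
  shows "(\<Sum>j<L. tau i ((j + 1) mod L) w * (\<Sum>k=1..n. eta k j w)) = (if 0 < gv n w (prv n i) then 1 else 0)"
proof -
  note F = Omega_facts[OF w]
  have bL: "bpos w i < L" using good_lt[OF F(2) i] .
  define t where "t = (bpos w i + L - 1) mod L"
  have tL: "t < L" using bL t_def by simp
  have "(\<Sum>j<L. tau i ((j + 1) mod L) w * (\<Sum>k=1..n. eta k j w))
      = (\<Sum>j<L. if j = t then (\<Sum>k=1..n. eta k t w) else 0)"
  proof (rule sum.cong[OF refl])
    fix j assume "j \<in> {..<L}"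
    then have j: "j < L" by simp
    have sj: "(j + 1) mod L < L" using j by simp
    have "w ! ((j + 1) mod L) = letter.Ball i \<longleftrightarrow> (j + 1) mod L = bpos w i" using F(3)[OF sj] i by auto
    also have "\<dots> \<longleftrightarrow> j = t" using pred_eq_iff[OF bL j] t_def by auto
    finally show "tau i ((j + 1) mod L) w * (\<Sum>k=1..n. eta k j w) =
        (if j = t then (\<Sum>k=1..n. eta k t w) else 0)"
      unfolding tau_def by auto
  qed
  also have "\<dots> = (\<Sum>k=1..n. eta k t w)" using tL by simp
  also have "\<dots> = (if 0 < gv n w (prv n i) then 1 else 0)"
    using eta_sum[OF w tL] left_nb[OF w i] t_def by simp
  finally show ?thesis .
qed

lemma Jball_gv:
  assumes n: "1 \<le> n" and i: "i \<in> {1..n}"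
  shows "Jball L n p q \<pi> i = (\<Sum>w\<in>Omega L n. \<pi> w *
      (p i * (if 0 < gv n w i then 1 else 0) - q i * (if 0 < gv n w (prv n i) then 1 else 0)))"
proof -
  have "Jball L n p q \<pi> i = (\<Sum>j<L. p i * (\<Sum>w\<in>Omega L n. \<pi> w * (tau i j w * (\<Sum>k = 1..n. eta k ((j + 1) mod L) w)))
      - q i * (\<Sum>w\<in>Omega L n. \<pi> w * (tau i ((j + 1) mod L) w * (\<Sum>k = 1..n. eta k j w))))"
    unfolding Jball_def Jball_ij_def expect_def by simp
  also have "\<dots> = p i * (\<Sum>w\<in>Omega L n. \<pi> w * (\<Sum>j<L. tau i j w * (\<Sum>k = 1..n. eta k ((j + 1) mod L) w)))
      - q i * (\<Sum>w\<in>Omega L n. \<pi> w * (\<Sum>j<L. tau i ((j + 1) mod L) w * (\<Sum>k = 1..n. eta k j w)))"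
    by (simp add: sum_subtractf sum_distrib_left sum.swap[of _ "{..<L}"])
  also have "\<dots> = p i * (\<Sum>w\<in>Omega L n. \<pi> w * (if 0 < gv n w i then 1 else 0))
      - q i * (\<Sum>w\<in>Omega L n. \<pi> w * (if 0 < gv n w (prv n i) then 1 else 0))"
    using tau_right[OF _ i] tau_left[OF _ i] by simp
  also have "\<dots> = (\<Sum>w\<in>Omega L n. \<pi> w *
      (p i * (if 0 < gv n w i then 1 else 0) - q i * (if 0 < gv n w (prv n i) then 1 else 0)))"
    by (simp add: sum_subtractf sum_distrib_left algebra_simps)
  finally show ?thesis .
qed

lemma shift_sum:
  assumes a: "a \<in> {1..n}" and m: "1 \<le> m"
  shows "(\<Sum>g\<in>Gs n m. nu n x g * (if 0 < g a then 1 else 0)) = x a * (\<Sum>g\<in>Gs n (m - 1). nu n x g)"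
proof -
  define add1 where "add1 h = (\<lambda>j\<in>{1..n}. h j + (if j = a then 1 else 0))" for h :: "nat \<Rightarrow> nat"
  define sub1 where "sub1 g = (\<lambda>j\<in>{1..n}. g j - (if j = a then 1 else 0))" for g :: "nat \<Rightarrow> nat"
  have nu_add: "nu n x (add1 h) = x a * nu n x h" for h
  proof -
    have "nu n x (add1 h) = (\<Prod>j\<in>{1..n}. x j ^ h j * (if j = a then x a else 1))"
      unfolding nu_def add1_def by (intro prod.cong) auto
    also have "\<dots> = nu n x h * x a" unfolding nu_def prod.distrib using a by (simp add: prod.delta)
    finally show ?thesis by simp
  qed
  have "(\<Sum>g\<in>Gs n m. nu n x g * (if 0 < g a then 1 else 0)) = (\<Sum>g\<in>{g \<in> Gs n m. 0 < g a}. nu n x g)"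
  proof -
    have "(\<Sum>g\<in>Gs n m. nu n x g * (if 0 < g a then 1 else 0)) = (\<Sum>g\<in>Gs n m. if 0 < g a then nu n x g else 0)"
      by (intro sum.cong) auto
    also have "\<dots> = (\<Sum>g\<in>{g \<in> Gs n m. 0 < g a}. nu n x g)"
      using finite_Gs by (simp add: sum.inter_filter)
    finally show ?thesis .
  qed
  also have "\<dots> = (\<Sum>h\<in>Gs n (m - 1). nu n x (add1 h))"
  proof (rule sum.reindex_bij_witness[where i = add1 and j = sub1])
    fix g assume g: "g \<in> {g \<in> Gs n m. 0 < g a}"
    then have ge: "g \<in> extensional {1..n}" and gs: "sum g {1..n} = m" and ga: "0 < g a" using Gs_iff by auto
    show "add1 (sub1 g) = g"
      using ga by (intro extensionalityI[OF _ ge]) (auto simp: add1_def sub1_def)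
    then show "nu n x (add1 (sub1 g)) = nu n x g" by simp
    have "sum (sub1 g) {1..n} + 1 = m"
    proof -
      have "sum (sub1 g) {1..n} + sum (\<lambda>j. if j = a then 1 else 0) {1..n} = sum (\<lambda>j. sub1 g j + (if j = a then 1 else 0)) {1..n}"
        by (simp add: sum.distrib)
      also have "\<dots> = sum g {1..n}" using ga by (intro sum.cong) (auto simp: sub1_def)
      finally show ?thesis using gs a by simp
    qed
    then show "sub1 g \<in> Gs n (m - 1)" unfolding Gs_iff sub1_def by simp
  next
    fix h assume h: "h \<in> Gs n (m - 1)"
    then have he: "h \<in> extensional {1..n}" and hs: "sum h {1..n} = m - 1" using Gs_iff by auto
    show "sub1 (add1 h) = h"
      by (intro extensionalityI[OF _ he]) (auto simp: add1_def sub1_def)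
    have "sum (add1 h) {1..n} = sum h {1..n} + sum (\<lambda>j. if j = a then 1 else 0) {1..n}"
      unfolding add1_def by (simp add: sum.distrib)
    then have "sum (add1 h) {1..n} = m" using hs a m by simp
    moreover have "0 < add1 h a" using a unfolding add1_def by simp
    ultimately show "add1 h \<in> {g \<in> Gs n m. 0 < g a}" unfolding Gs_iff add1_def by simp
  qed
  also have "\<dots> = x a * (\<Sum>g\<in>Gs n (m - 1). nu n x g)" using nu_add by (simp add: sum_distrib_left)
  finally show ?thesis .
qed

theorem corollary6p10:
  fixes L n i :: nat and p q :: "nat \<Rightarrow> real" and \<pi> :: "letter list \<Rightarrow> real"
  assumes "1 \<le> n" and "n < L"
    and "\<forall>k\<in>{1..n}. 0 < p k \<and> 0 < q k"
    and "stationary L n p q \<pi>"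
    and "i \<in> {1..n}"
  shows "Jball L n p q \<pi> i
         = ((\<Prod>k\<in>{1..n}. p k) - (\<Prod>k\<in>{1..n}. q k)) * Z (L - 1) n p q / Z L n p q"
proof -
  note n = assms(1) and nL = assms(2) and st = assms(4) and i = assms(5)
  have pq: "\<And>k. k \<in> {1..n} \<Longrightarrow> 0 < p k \<and> 0 < q k" using assms(3) by blast
  define x where "x = xw n p q"
  define D where "D = (\<Prod>k\<in>{1..n}. p k) - (\<Prod>k\<in>{1..n}. q k)"
  define m where "m = L - n"
  have m1: "1 \<le> m" using nL m_def by simp
  have xpos: "\<And>j. j \<in> {1..n} \<Longrightarrow> 0 < x j" using xw_pos[where p=p and q=q and n=n, OF pq] x_def by blast
  have flux: "\<And>k. k \<in> {1..n} \<Longrightarrow> p k * x k - q k * x (prv n k) = D" using xw_flux x_def D_def by blast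
  note LU = lumped[OF st n]
  have mueq: "\<And>h. h \<in> Gs n m \<Longrightarrow> (\<Sum>g\<in>Gs n m. mu L n \<pi> g * Rz n p q g h) = mu L n \<pi> h * Oz n p q h"
    unfolding m_def by (rule LU(1))
  have "\<exists>C. \<forall>g\<in>Gs n m. mu L n \<pi> g = C * nu n x g"
    by (rule unique_stat[where p=p and q=q and n=n and x=x and D=D and \<mu>="mu L n \<pi>" and m=m, OF n pq xpos flux mueq])
  then obtain C where C: "\<And>g. g \<in> Gs n m \<Longrightarrow> mu L n \<pi> g = C * nu n x g" by blast
  define Y where "Y k = (\<Sum>g\<in>Gs n k. nu n x g)" for k
  have ZL: "Z L n p q = Y m" unfolding Y_def m_def x_def using Z_formula[OF n, of L p q] nL by simp
  have ZL1: "Z (L - 1) n p q = Y (m - 1)" unfolding Y_def m_def x_def using Z_formula[OF n, of "L - 1" p q] nL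
    by (simp add: diff_commute)
  have "1 = (\<Sum>g\<in>Gs n m. mu L n \<pi> g)" using LU(3) m_def by simp
  also have "\<dots> = C * Y m" unfolding Y_def using C by (simp add: sum_distrib_left)
  finally have CY: "C * Y m = 1" by simp
  have "Jball L n p q \<pi> i = (\<Sum>g\<in>Gs n m. mu L n \<pi> g *
      (p i * (if 0 < g i then 1 else 0) - q i * (if 0 < g (prv n i) then 1 else 0)))"
    unfolding Jball_gv[OF n i] m_def
    by (rule sum_group_gv[OF n, where F = "\<lambda>g. p i * (if 0 < g i then 1 else 0) - q i * (if 0 < g (prv n i) then 1 else 0)"])
  also have "\<dots> = C * (p i * (\<Sum>g\<in>Gs n m. nu n x g * (if 0 < g i then 1 else 0))
      - q i * (\<Sum>g\<in>Gs n m. nu n x g * (if 0 < g (prv n i) then 1 else 0)))"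
    using C by (simp add: sum_subtractf sum_distrib_left algebra_simps)
  also have "\<dots> = C * ((p i * x i - q i * x (prv n i)) * Y (m - 1))"
    using shift_sum[OF i m1, of x] shift_sum[OF prv_in[OF i] m1, of x] unfolding Y_def
    by (simp add: algebra_simps)
  also have "\<dots> = C * D * Y (m - 1)" using flux[OF i] by simp
  also have "\<dots> = D * Y (m - 1) / Y m"
  proof -
    have "Y m \<noteq> 0" using CY by auto
    then have "C = 1 / Y m" using CY by (simp add: field_simps)
    then show ?thesis by simp
  qed
  finally show ?thesis using ZL ZL1 D_def by simp
qed


end
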